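(* Let $\mathbb{K}$ be an algebraically closed field of characteristic $0$, let $p\in\mathbb{K}[x,y]\setminus(\mathbb{K}[x]\cup\mathbb{K}[y])$ be irreducible with $\mathrm{F}(p)\cong\mathbb{K}$, let $r\in\mathbb{K}[x,y]_p\setminus\langle p\rangle$, and let $(f,g)\in\mathrm{F}(r,p)$. Assume the orbit $\mathcal{O}$ (on the curve $C$ associated with $p$) of some pole of $r$ is infinite. Then $\mathcal{O}$ contains a pole $(s_1,s_2)$ of $r$ such that $s_1$ is not a pole of $f$ or $s_2$ is not a pole of $g$.
   Context: $\mathbb{K}[x,y]_p$ is the set of $h\in\mathbb{K}(x,y)$ whose reduced denominator is not divisible by $p$; $\langle p\rangle=\{qp:q\in\mathbb{K}[x,y]_p\}$; $\mathrm{F}(r,p)=\{(f,g)\in\mathbb{K}(x)\times\mathbb{K}(y):f-g\in r+\langle p\rangle\}$ and $\mathrm{F}(p)=\mathrm{F}(0,p)$, a field under componentwise operations; $\mathrm{F}(p)\cong\mathbb{K}$ means it consists only of pairs of equal constants. $C\subset\mathbb{P}^1(\mathbb{K})\times\mathbb{P}^1(\mathbb{K})$ is the zero set of the bi-homogenization $x_0^{\deg_x p}y_0^{\deg_y p}p(x_1/x_0,y_1/y_0)$. Orbits are the classes of the smallest equivalence relation on $C$ with $(a,b)\sim(c,d)$ whenever $a=c$ or $b=d$. For $f\in\mathbb{K}(x)$, $s\in\mathbb{K}\cup\{\infty\}$ is a pole of $f$ if $\mathrm{m}(s,f)>0$, where $\mathrm{m}(s,f)$ is minus the valuation of $f$ as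 Laurent series in $x-s$ (resp. $x^{-1}$ if $s=\infty$); similarly for $g\in\mathbb{K}(y)$. A point $(\infty,\infty)\in C$ is a pole of $r$ if there is a Puiseux series $\varphi\in\mathbb{K}\{\{x^{-1}\}\}$ with $p(x,\varphi)=0$, $\deg\varphi>0$ and $\deg r(x,\varphi)>0$ (degree = largest exponent of $x$); a general point $(s_1,s_2)\in C$ is a pole of $r$ if, for a pair $T$ of Möbius transformations sending $(s_1,s_2)$ to $(\infty,\infty)$, $(\infty,\infty)$ is a pole of $r\circ T^{-1}$ on the curve of the numerator of $p\circ T^{-1}$. *)

theory Defs
  imports "HOL-Computational_Algebra.Computational_Algebra"
begin

text \<open>Bivariate polynomials K[x,y] are represented as 'a poly poly: the outer variable
is y, the coefficients are polynomials in x. Rational functions K(x,y) are the fraction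
field 'a poly poly fract; univariate rational functions K(x), K(y) are 'a poly fract.\<close>

definition alg_closed :: "'a::field itself \<Rightarrow> bool" where
  "alg_closed _ \<longleftrightarrow> (\<forall>q::'a poly. degree q > 0 \<longrightarrow> (\<exists>z. poly q z = 0))"

definition const_x :: "'a::field poly \<Rightarrow> 'a poly poly" where
  "const_x u = [:u:]"

definition const_y :: "'a::field poly \<Rightarrow> 'a poly poly" where
  "const_y u = map_poly (\<lambda>c. [:c:]) u"

definition emb_x :: "'a::field poly fract \<Rightarrow> 'a poly poly fract" where
  "emb_x f = (SOME R. \<exists>u v. v \<noteq> 0 \<and> f = Fract u v \<and> R = Fract (const_x u) (const_x v))"

definition emb_y :: "'a::field poly fract \<Rightarrow> 'a poly poly fract" where
  "emb_y g = (SOME R. \<exists>u v. v \<noteq> 0 \<and> g = Fract u v \<and> R = Fract (const_y u) (const_y v))"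

definition deg_x :: "'a::field poly poly \<Rightarrow> nat" where
  "deg_x p = Max (insert 0 ((\<lambda>j. degree (coeff p j)) ` {..degree p}))"

text \<open>K[x,y]_p: reduced denominator not divisible by p (p irreducible, hence prime).\<close>
definition loc :: "'a::field poly poly \<Rightarrow> 'a poly poly fract set" where
  "loc p = {h. \<exists>a b. b \<noteq> 0 \<and> h = Fract a b \<and> \<not> p dvd b}"

definition ideal_loc :: "'a::field poly poly \<Rightarrow> 'a poly poly fract set" where
  "ideal_loc p = {q * Fract p 1 | q. q \<in> loc p}"

definition FF :: "'a::field poly poly fract \<Rightarrow> 'a poly poly \<Rightarrow> ('a poly fract \<times> 'a poly fract) set" where
  "FF r p = {(f, g). emb_x f - emb_y g - r \<in> ideal_loc p}"

definition const_fract :: "'a::field \<Rightarrow> 'a poly fract" where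
  "const_fract c = Fract [:c:] 1"

text \<open>F(p) is isomorphic to K: it only contains pairs of equal constants.\<close>
definition F_trivial :: "'a::field poly poly \<Rightarrow> bool" where
  "F_trivial p \<longleftrightarrow> (\<forall>f g. (f, g) \<in> FF 0 p \<longrightarrow> (\<exists>c. f = const_fract c \<and> g = const_fract c))"

text \<open>Points of P^1(K): None is infinity; homogeneous coordinates (x0,x1).\<close>
definition hom :: "'a::field option \<Rightarrow> 'a \<times> 'a" where
  "hom s = (case s of None \<Rightarrow> (0, 1) | Some c \<Rightarrow> (1, c))"

definition bihom_eval :: "'a::field poly poly \<Rightarrow> 'a \<times> 'a \<Rightarrow> 'a \<times> 'a \<Rightarrow> 'a" where
  "bihom_eval p X Y =
     (\<Sum>j\<le>degree p. \<Sum>i\<le>deg_x p. coeff (coeff p j) i * snd X ^ i * fst X ^ (deg_x p - i)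
        * snd Y ^ j * fst Y ^ (degree p - j))"

definition curve :: "'a::field poly poly \<Rightarrow> ('a option \<times> 'a option) set" where
  "curve p = {(a, b). bihom_eval p (hom a) (hom b) = 0}"

definition orbit_rel :: "'a::field poly poly \<Rightarrow> (('a option \<times> 'a option) \<times> ('a option \<times> 'a option)) set" where
  "orbit_rel p = {(P, Q). P \<in> curve p \<and> Q \<in> curve p \<and> (fst P = fst Q \<or> snd P = snd Q)}"

definition orbit :: "'a::field poly poly \<Rightarrow> 'a option \<times> 'a option \<Rightarrow> ('a option \<times> 'a option) set" where
  "orbit p P = {Q. (P, Q) \<in> (orbit_rel p)\<^sup>*}"

definition is_pole_1 :: "'a::field poly fract \<Rightarrow> 'a option \<Rightarrow> bool" where
  "is_pole_1 f s \<longleftrightarrow> (\<exists>u v. v \<noteq> 0 \<and> u \<noteq> 0 \<and> f = Fract u v \<and>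
      (case s of None \<Rightarrow> degree u > degree v | Some c \<Rightarrow> order c v > order c u))"

definition eval2 :: "'a::field poly poly \<Rightarrow> 'a fls \<Rightarrow> 'a fls \<Rightarrow> 'a fls" where
  "eval2 q X Y = poly (map_poly (\<lambda>c. poly (map_poly fls_const c) X) q) Y"

text \<open>Inverse of the Moebius transformation sending s to infinity (identity if s = infinity,
  X \<mapsto> s + 1/X otherwise).\<close>
definition moeb_inv :: "'a::field option \<Rightarrow> 'a fls \<Rightarrow> 'a fls" where
  "moeb_inv s X = (case s of None \<Rightarrow> X | Some c \<Rightarrow> fls_const c + inverse X)"

text \<open>A Puiseux series \<phi> in K{{x^-1}} with ramification n is \<psi>(t) with t = x^(-1/n),
  \<psi> a formal Laurent series in t; then x = t^(-n). deg \<phi> > 0 iff subdegree \<psi> < 0.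
  A point (s1,s2) of C is a pole of r if after the Moebius change T, (\<infinity>,\<infinity>) is a pole
  of r \<circ> T^-1 on the curve of p \<circ> T^-1.\<close>
definition is_pole_r :: "'a::field poly poly \<Rightarrow> 'a poly poly fract \<Rightarrow> 'a option \<times> 'a option \<Rightarrow> bool" where
  "is_pole_r p r P \<longleftrightarrow> P \<in> curve p \<and>
     (\<exists>(n::nat) \<psi>. n > 0 \<and> fls_subdegree \<psi> < 0 \<and> \<psi> \<noteq> 0 \<and>
        (let X = moeb_inv (fst P) (inverse (fls_X ^ n)); Y = moeb_inv (snd P) \<psi> in
          eval2 p X Y = 0 \<and>
          (\<exists>a b. b \<noteq> 0 \<and> r = Fract a b \<and> eval2 b X Y \<noteq> 0 \<and>
              fls_subdegree (eval2 a X Y / eval2 b X Y) < 0)))"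

end

theory Submission
  imports Defs
begin


lemma map_poly_hom_add:
  assumes "h 0 = 0" "\<And>x y. h (x + y) = h x + h y"
  shows "map_poly h (p + q) = map_poly h p + map_poly h q"
  by (intro poly_eqI) (simp add: assms coeff_map_poly)

lemma map_poly_hom_diff:
  fixes h :: "'a::ab_group_add \<Rightarrow> 'b::ab_group_add"
  assumes "h 0 = 0" "\<And>x y. h (x - y) = h x - h y"
  shows "map_poly h (p - q) = map_poly h p - map_poly h q"
  by (intro poly_eqI) (simp add: assms coeff_map_poly)

lemma map_poly_hom_mult:
  fixes h :: "'a::comm_semiring_0 \<Rightarrow> 'b::comm_semiring_0"
  assumes z: "h 0 = 0" and add: "\<And>x y. h (x + y) = h x + h y"
    and mult: "\<And>x y. h (x * y) = h x * h y"
  shows "map_poly h (p * q) = map_poly h p * map_poly h q"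
proof (induction p)
  case 0 then show ?case by simp
next
  case (pCons a p)
  have "map_poly h (pCons a p * q) = map_poly h (smult a q + pCons 0 (p * q))"
    by simp
  also have "\<dots> = smult (h a) (map_poly h q) + pCons 0 (map_poly h p * map_poly h q)"
    by (simp add: map_poly_hom_add[OF z add] map_poly_smult[OF z mult] map_poly_pCons[of h, OF z] pCons z)
  also have "\<dots> = map_poly h (pCons a p) * map_poly h q"
    by (simp add: map_poly_pCons[of h, OF z])
  finally show ?case .
qed

lemma map_poly_hom_power:
  fixes h :: "'a::comm_semiring_1 \<Rightarrow> 'b::comm_semiring_1"
  assumes z: "h 0 = 0" and o: "h 1 = 1" and add: "\<And>x y. h (x + y) = h x + h y"
    and mult: "\<And>x y. h (x * y) = h x * h y"
  shows "map_poly h (p ^ n) = map_poly h p ^ n"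
  by (induction n) (simp_all add: o map_poly_hom_mult[OF z add mult])

lemma map_poly_hom_sum:
  assumes "h 0 = 0" "\<And>x y. h (x + y) = h x + h y"
  shows "map_poly h (sum f A) = (\<Sum>i\<in>A. map_poly h (f i))"
  by (induction A rule: infinite_finite_induct) (simp_all add: map_poly_hom_add[OF assms])

lemma hom_poly:
  fixes h :: "'a::comm_semiring_1 \<Rightarrow> 'b::comm_semiring_1"
  assumes z: "h 0 = 0" and add: "\<And>x y. h (x + y) = h x + h y"
    and mult: "\<And>x y. h (x * y) = h x * h y"
  shows "h (poly p x) = poly (map_poly h p) (h x)"
  by (induction p) (simp_all add: map_poly_pCons[of h, OF z] add mult z)

lemma map_poly_hom_pcompose:
  fixes h :: "'a::comm_semiring_1 \<Rightarrow> 'b::comm_semiring_1"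
  assumes z: "h 0 = 0" and add: "\<And>x y. h (x + y) = h x + h y"
    and mult: "\<And>x y. h (x * y) = h x * h y"
  shows "map_poly h (pcompose p q) = pcompose (map_poly h p) (map_poly h q)"
proof (induction p)
  case 0 then show ?case by simp
next
  case (pCons a p)
  show ?case
    by (simp add: pcompose_pCons map_poly_pCons[of h, OF z] map_poly_hom_add[OF z add]
        map_poly_hom_mult[OF z add mult] pCons z)
qed

lemma pcompose_as_sum:
  fixes p :: "'a::comm_semiring_1 poly"
  shows "pcompose p q = (\<Sum>j\<le>degree p. smult (coeff p j) (q ^ j))"
proof -
  have "pcompose p q = poly (map_poly (\<lambda>x. [:x:]) p) q" by (rule pcompose_altdef)
  also have "\<dots> = (\<Sum>j\<le>degree (map_poly (\<lambda>x. [:x:]) p). coeff (map_poly (\<lambda>x. [:x:]) p) j * q ^ j)"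
    by (rule poly_altdef)
  also have "\<dots> = (\<Sum>j\<le>degree p. smult (coeff p j) (q ^ j))"
    by (simp add: coeff_map_poly degree_map_poly)
  finally show ?thesis .
qed


definition mult0 :: "'a::comm_ring_1 fps poly \<Rightarrow> nat \<Rightarrow> bool" where
  "mult0 F m \<longleftrightarrow> (\<forall>j<m. coeff F j $ 0 = 0) \<and> coeff F m $ 0 \<noteq> 0"

definition sol :: "'a::field fps poly \<Rightarrow> nat \<Rightarrow> 'a fps \<Rightarrow> bool" where
  "sol F n y \<longleftrightarrow> n > 0 \<and> y $ 0 = 0 \<and> poly (map_poly (\<lambda>q. q oo fps_X ^ n) F) y = 0"

definition substid :: "'a::field fps poly \<Rightarrow> nat \<Rightarrow> nat \<Rightarrow> 'a \<Rightarrow> nat \<Rightarrow> 'a fps poly \<Rightarrow> bool" where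
  "substid F a b c m G \<longleftrightarrow>
     pcompose (map_poly (\<lambda>q. q oo fps_X ^ b) F) [: fps_const c * fps_X ^ a, fps_X ^ a :]
       = smult (fps_X ^ (a * m)) G"

lemma compX_hom:
  fixes q r :: "'a::field fps"
  assumes "n > 0"
  shows "(q + r) oo fps_X ^ n = (q oo fps_X ^ n) + (r oo fps_X ^ n)"
    "(q * r) oo fps_X ^ n = (q oo fps_X ^ n) * (r oo fps_X ^ n)"
    "(0::'a fps) oo fps_X ^ n = 0"
  using assms by (simp_all add: fps_compose_add_distrib fps_compose_mult_distrib)

lemma compX_compX:
  fixes q :: "'a::field fps"
  assumes "n > 0" "b > 0"
  shows "(q oo fps_X ^ b) oo fps_X ^ n = q oo fps_X ^ (b * n)"
proof -
  have "(q oo fps_X ^ b) oo fps_X ^ n = q oo (fps_X ^ b oo fps_X ^ n)"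
    using assms by (simp add: fps_compose_assoc)
  also have "fps_X ^ b oo fps_X ^ n = (fps_X ^ n :: 'a fps) ^ b"
    using assms by (simp add: fps_X_power_compose)
  also have "\<dots> = fps_X ^ (b * n)" by (simp only: power_mult[symmetric] mult.commute)
  finally show ?thesis .
qed

lemma Xpow_comp:
  assumes "n > 0"
  shows "(fps_X ^ a :: 'a::field fps) oo fps_X ^ n = fps_X ^ (a * n)"
proof -
  have "(fps_X ^ a :: 'a::field fps) oo fps_X ^ n = (fps_X ^ n) ^ a" using assms by (simp add: fps_X_power_compose)
  also have "\<dots> = fps_X ^ (a * n)" by (simp only: power_mult[symmetric] mult.commute)
  finally show ?thesis .
qed

lemma lift_sol:
  fixes F G :: "'a::field fps poly"
  assumes a: "a > 0" and b: "b > 0" and sid: "substid F a b c m G" and s: "sol G n y"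
  shows "sol F (b * n) (fps_X ^ (a * n) * (fps_const c + y))"
proof -
  have n: "n > 0" using s by (simp add: sol_def)
  define h where "h = (\<lambda>q::'a fps. q oo fps_X ^ n)"
  have h0: "h 0 = 0" and hadd: "\<And>x y. h (x + y) = h x + h y" and hmult: "\<And>x y. h (x * y) = h x * h y"
    using compX_hom[OF n] by (simp_all add: h_def)
  have "map_poly h (pcompose (map_poly (\<lambda>q. q oo fps_X ^ b) F) [: fps_const c * fps_X ^ a, fps_X ^ a :])
      = map_poly h (smult (fps_X ^ (a * m)) G)"
    using sid by (simp add: substid_def)
  hence "pcompose (map_poly h (map_poly (\<lambda>q. q oo fps_X ^ b) F)) (map_poly h [: fps_const c * fps_X ^ a, fps_X ^ a :])
      = smult (h (fps_X ^ (a * m))) (map_poly h G)"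
    by (simp add: map_poly_hom_pcompose[OF h0 hadd hmult] map_poly_smult[OF h0 hmult])
  moreover have "map_poly h (map_poly (\<lambda>q. q oo fps_X ^ b) F) = map_poly (\<lambda>q. q oo fps_X ^ (b * n)) F"
    by (simp add: map_poly_map_poly h_def o_def compX_compX[OF n b])
  moreover have "map_poly h [: fps_const c * fps_X ^ a, fps_X ^ a :] = [: fps_const c * fps_X ^ (a * n), fps_X ^ (a * n) :]"
    using n by (simp add: h_def map_poly_pCons fps_compose_mult_distrib Xpow_comp)
  ultimately have eq: "pcompose (map_poly (\<lambda>q. q oo fps_X ^ (b * n)) F) [: fps_const c * fps_X ^ (a * n), fps_X ^ (a * n) :]
      = smult (h (fps_X ^ (a * m))) (map_poly h G)" by simp
  have "poly (map_poly (\<lambda>q. q oo fps_X ^ (b * n)) F) (fps_X ^ (a * n) * (fps_const c + y))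
      = poly (pcompose (map_poly (\<lambda>q. q oo fps_X ^ (b * n)) F) [: fps_const c * fps_X ^ (a * n), fps_X ^ (a * n) :]) y"
    by (simp add: poly_pcompose algebra_simps)
  also have "\<dots> = h (fps_X ^ (a * m)) * poly (map_poly h G) y" by (simp add: eq)
  also have "poly (map_poly h G) y = 0" using s by (simp add: sol_def h_def)
  finally have "poly (map_poly (\<lambda>q. q oo fps_X ^ (b * n)) F) (fps_X ^ (a * n) * (fps_const c + y)) = 0"
    by simp
  moreover have "(fps_X ^ (a * n) * (fps_const c + y)) $ 0 = 0"
    using a n by (simp add: fps_X_power_mult_nth)
  ultimately show ?thesis using a b n by (simp add: sol_def)
qed

function lim_coef :: "(nat \<Rightarrow> nat) \<Rightarrow> (nat \<Rightarrow> 'a::zero) \<Rightarrow> nat \<Rightarrow> nat \<Rightarrow> 'a" where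
  "lim_coef a c k j = (if a k = 0 \<or> j < a k then 0 else if j = a k then c k
      else lim_coef a c (Suc k) (j - a k))"
  by auto
termination by (relation "measure (\<lambda>(a, c, k, j). j)") auto

declare lim_coef.simps[simp del]

lemma limit_sol:
  fixes F :: "nat \<Rightarrow> 'a::field fps poly"
  assumes m: "m > 0" and apos: "\<And>k. a k > 0"
    and sid: "\<And>k. pcompose (F k) [: fps_const (c k) * fps_X ^ a k, fps_X ^ a k :]
                   = smult (fps_X ^ (a k * m)) (F (Suc k))"
  shows "\<exists>y. y $ 0 = 0 \<and> poly (F 0) y = 0"
proof -
  define y where "y k = Abs_fps (lim_coef a c k)" for k
  have y0: "y k $ 0 = 0" for k using apos[of k] by (simp add: y_def lim_coef.simps)
  have yrec: "y k = fps_X ^ a k * (fps_const (c k) + y (Suc k))" for k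
  proof (rule fps_ext)
    fix n
    show "y k $ n = (fps_X ^ a k * (fps_const (c k) + y (Suc k))) $ n"
      using apos[of k] y0[of "Suc k"]
      by (auto simp: fps_X_power_mult_nth y_def lim_coef.simps[of a c k n])
  qed
  define e where "e k = (\<Sum>i<k. a i)" for k
  have ek: "e k \<ge> k" for k
  proof -
    have "(\<Sum>i<k. 1) \<le> (\<Sum>i<k. a i)" by (intro sum_mono) (use apos in \<open>simp add: Suc_le_eq\<close>)
    thus ?thesis by (simp add: e_def)
  qed
  have main: "poly (F 0) (y 0) = fps_X ^ (m * e k) * poly (F k) (y k)" for k
  proof (induction k)
    case 0 then show ?case by (simp add: e_def)
  next
    case (Suc k)
    have "poly (F k) (y k) = poly (F k) (poly [: fps_const (c k) * fps_X ^ a k, fps_X ^ a k :] (y (Suc k)))"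
      by (subst yrec) (simp add: algebra_simps)
    also have "\<dots> = poly (pcompose (F k) [: fps_const (c k) * fps_X ^ a k, fps_X ^ a k :]) (y (Suc k))"
      by (simp only: poly_pcompose)
    also have "\<dots> = poly (smult (fps_X ^ (a k * m)) (F (Suc k))) (y (Suc k))"
      by (simp only: sid)
    also have "\<dots> = fps_X ^ (a k * m) * poly (F (Suc k)) (y (Suc k))" by simp
    finally have st: "poly (F k) (y k) = fps_X ^ (a k * m) * poly (F (Suc k)) (y (Suc k))" .
    have "e (Suc k) = e k + a k" by (simp add: e_def)
    hence "fps_X ^ (m * e (Suc k)) = (fps_X ^ (m * e k) * fps_X ^ (a k * m) :: 'a fps)"
      by (simp add: power_add[symmetric] algebra_simps)
    thus ?case using Suc st by (simp only: mult.assoc)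
  qed
  have "poly (F 0) (y 0) = 0"
  proof (rule fps_ext)
    fix n
    have "e (Suc n) \<le> m * e (Suc n)" using m by simp
    hence "m * e (Suc n) > n" using ek[of "Suc n"] by linarith
    thus "poly (F 0) (y 0) $ n = 0 $ n"
      by (subst main[of "Suc n"]) (simp add: fps_X_power_mult_nth)
  qed
  thus ?thesis using y0 by blast
qed


lemma ord_coeffs:
  fixes q :: "'a::field poly"
  assumes "q \<noteq> 0"
  shows "\<And>k. k < order 0 q \<Longrightarrow> coeff q k = 0" "coeff q (order 0 q) \<noteq> 0"
proof -
  obtain r where r: "q = [:-0,1:] ^ order 0 q * r" "\<not> [:-0,1:] dvd r"
    using order_decomp[OF assms] by blast
  have qr: "q = monom 1 (order 0 q) * r" using r(1) by (simp add: monom_altdef)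
  have "poly r 0 \<noteq> 0" using r(2) by (simp add: poly_eq_0_iff_dvd)
  hence r0: "coeff r 0 \<noteq> 0" by (simp add: poly_0_coeff_0)
  show "\<And>k. k < order 0 q \<Longrightarrow> coeff q k = 0"
    by (subst qr) (simp add: coeff_monom_mult)
  show "coeff q (order 0 q) \<noteq> 0"
    using r0 by (subst qr) (simp add: coeff_monom_mult)
qed

lemma order_0_le:
  fixes q :: "'a::field poly"
  assumes "coeff q j \<noteq> 0"
  shows "order 0 q \<le> j"
proof (rule ccontr)
  assume "\<not> order 0 q \<le> j"
  moreover have "q \<noteq> 0" using assms by auto
  ultimately show False using ord_coeffs(1)[of q j] assms by simp
qed

lemma pcompose_power_left: "pcompose (p ^ n) q = (pcompose p q) ^ n"
  for p q :: "'a::comm_semiring_1 poly"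
  by (induction n) (simp_all add: pcompose_mult pcompose_1)

lemma order_pcompose_shift:
  fixes p :: "'a::field poly"
  assumes "p \<noteq> 0"
  shows "order 0 (pcompose p [:c, 1:]) = order c p"
proof -
  obtain r where r: "p = [:-c,1:] ^ order c p * r" "\<not> [:-c,1:] dvd r"
    using order_decomp[OF assms] by blast
  have rc: "poly r c \<noteq> 0" using r(2) by (simp add: poly_eq_0_iff_dvd)
  have "pcompose [:-c, 1:] [:c, 1:] = [:0, 1:]" by (simp add: pcompose_pCons)
  hence eq: "pcompose p [:c, 1:] = [:-0, 1:] ^ order c p * pcompose r [:c, 1:]"
    by (subst r(1)) (simp add: pcompose_mult pcompose_power_left)
  have nz: "poly (pcompose r [:c, 1:]) 0 \<noteq> 0" using rc by (simp add: poly_pcompose)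
  hence "pcompose r [:c, 1:] \<noteq> 0" by auto
  hence nz2: "[:-0, 1:] ^ order c p * pcompose r [:c, 1:] \<noteq> 0" by simp
  hence "order 0 (pcompose p [:c, 1:]) = order (0::'a) ([:-0, 1:] ^ order c p) + order 0 (pcompose r [:c, 1:])"
    using order_mult[OF nz2, of 0] eq by simp
  also have "\<dots> = order c p" using order_0I[OF nz] order_power_n_n[of "0::'a" "order c p"] by simp
  finally show ?thesis .
qed

lemma coeff_linear_power_pred:
  "coeff ([:-c, 1:] ^ Suc n) n = - of_nat (Suc n) * (c :: 'a::comm_ring_1)"
proof (induction n)
  case 0 then show ?case by simp
next
  case (Suc n)
  define P where "P = [:-c, 1:] ^ Suc n"
  have "[:-c, 1:] ^ Suc (Suc n) = pCons (-c) [:1:] * P" by (simp add: P_def)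
  also have "\<dots> = smult (-c) P + pCons 0 P" by (simp only: mult_pCons_left) simp
  finally have "coeff ([:-c, 1:] ^ Suc (Suc n)) (Suc n) = -c * coeff P (Suc n) + coeff P n"
    by simp
  also have "coeff P (Suc n) = 1" unfolding P_def by (rule coeff_linear_power)
  also have "coeff P n = - of_nat (Suc n) * c" using Suc by (simp add: P_def)
  finally show ?case by (simp add: algebra_simps)
qed

lemma pcompose_as_sum':
  fixes p :: "'a::comm_semiring_1 poly"
  assumes "degree p \<le> N"
  shows "pcompose p q = (\<Sum>j\<le>N. smult (coeff p j) (q ^ j))"
proof -
  have "pcompose p q = (\<Sum>j\<le>degree p. smult (coeff p j) (q ^ j))" by (rule pcompose_as_sum)
  also have "\<dots> = (\<Sum>j\<le>N. smult (coeff p j) (q ^ j))"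
    using assms by (intro sum.mono_neutral_left) (auto simp: coeff_eq_0)
  finally show ?thesis .
qed

lemma edge_root:
  fixes \<phi> :: "'a::field_char_0 poly"
  assumes ac: "alg_closed TYPE('a)" and dm: "degree \<phi> = m" and js: "js < m" "coeff \<phi> js \<noteq> 0"
  shows "\<exists>c. c \<noteq> 0 \<and> 0 < order c \<phi> \<and> order c \<phi> \<le> m \<and>
             (order c \<phi> = m \<longrightarrow> coeff \<phi> (m - 1) \<noteq> 0)"
proof -
  have nz: "\<phi> \<noteq> 0" using js by auto
  define k0 where "k0 = order 0 \<phi>"
  have k0: "k0 \<le> js" using order_0_le[OF js(2)] by (simp add: k0_def)
  obtain r where r: "\<phi> = [:-0,1:] ^ k0 * r" "\<not> [:-0,1:] dvd r"
    using order_decomp[OF nz] k0_def by blast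
  have r0: "poly r 0 \<noteq> 0" using r(2) by (simp add: poly_eq_0_iff_dvd)
  have rnz: "r \<noteq> 0" using r0 by auto
  have dr: "degree r = m - k0" using dm r(1) rnz by (simp add: degree_mult_eq degree_power_eq)
  hence "degree r > 0" using k0 js by simp
  then obtain c where c: "poly r c = 0" using ac unfolding alg_closed_def by blast
  have c0: "c \<noteq> 0" using c r0 by auto
  have ordr: "order c \<phi> = order c r"
  proof -
    have "order c \<phi> = order c ([:-0,1:] ^ k0) + order c r"
      using nz r(1) order_mult by metis
    moreover have "order c ([:-0,1:] ^ k0) = 0" using c0 by (intro order_0I) simp
    ultimately show ?thesis by simp
  qed
  have pos: "0 < order c \<phi>" using ordr c rnz order_root by auto
  have le: "order c \<phi> \<le> m - k0" using ordr order_degree[OF rnz] dr by simp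
  have last: "coeff \<phi> (m - 1) \<noteq> 0" if eqm: "order c \<phi> = m"
  proof -
    have m0: "m > 0" using js by simp
    have "[:-c,1:] ^ m dvd \<phi>" using order_1[of c \<phi>] eqm by simp
    then obtain k where k: "\<phi> = [:-c,1:] ^ m * k" by (elim dvdE)
    have knz: "k \<noteq> 0" using k nz by auto
    have "degree \<phi> = m + degree k" using k knz by (simp add: degree_mult_eq degree_power_eq degree_linear_power)
    hence "degree k = 0" using dm by simp
    then obtain \<kappa> where "k = [:\<kappa>:]" by (elim degree_eq_zeroE)
    with k knz have phi: "\<phi> = smult \<kappa> ([:-c,1:] ^ m)" "\<kappa> \<noteq> 0" by auto
    obtain n where n: "m = Suc n" using m0 by (cases m) auto
    have "coeff \<phi> (m - 1) = \<kappa> * (- of_nat m * c)"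
      using phi(1) n coeff_linear_power_pred[of c n] by simp
    thus ?thesis using phi(2) c0 m0 by simp
  qed
  show ?thesis using c0 pos le last by auto
qed


lemma pcompose_monom: "pcompose (monom a j) q = smult a (q ^ j)"
  for q :: "'a::comm_semiring_1 poly"
  by (simp add: monom_altdef pcompose_smult pcompose_power_left pcompose_pCons)

lemma degree_map_poly_le0:
  assumes "f 0 = 0"
  shows "degree (map_poly f p) \<le> degree p"
  by (rule degree_le) (auto simp: coeff_map_poly coeff_eq_0 assms)

lemma smult_sum_right: "smult c (sum f A) = (\<Sum>i\<in>A. smult c (f i))"
  by (induction A rule: infinite_finite_induct) (simp_all add: smult_add_right)

lemma newton_step:
  fixes F :: "'a::field_char_0 fps poly"
  assumes ac: "alg_closed TYPE('a)" and m: "m > 0" and mu: "mult0 F m" and F0: "coeff F 0 \<noteq> 0"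
  shows "\<exists>a b c G m1. a > 0 \<and> b > 0 \<and> 0 < m1 \<and> m1 \<le> m \<and> (m1 = m \<longrightarrow> b = 1) \<and> mult0 G m1
           \<and> substid F a b c m G"
proof -
  define v where "v j = subdegree (coeff F j)" for j
  define S where "S = {j. j < m \<and> coeff F j \<noteq> 0}"
  have finS: "finite S" by (simp add: S_def)
  have S0: "0 \<in> S" using m F0 by (simp add: S_def)
  have vpos: "v j > 0" if "j \<in> S" for j
  proof -
    have "coeff F j $ 0 = 0" "coeff F j \<noteq> 0" using that mu by (auto simp: S_def mult0_def)
    thus ?thesis by (simp add: v_def subdegree_pos_iff)
  qed
  define f where "f j = (of_nat (v j) / of_nat (m - j) :: rat)" for j
  obtain js where js: "js \<in> S" "\<And>j. j \<in> S \<Longrightarrow> f js \<le> f j"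
  proof -
    have "Min (f ` S) \<in> f ` S" using finS S0 by (intro Min_in) auto
    then obtain js where "js \<in> S" "f js = Min (f ` S)" by auto
    moreover have "\<And>j. j \<in> S \<Longrightarrow> Min (f ` S) \<le> f j" using finS by auto
    ultimately show ?thesis using that by metis
  qed
  have jsm: "js < m" using js(1) by (simp add: S_def)
  have cross: "v js * (m - j) \<le> v j * (m - js)" if "j \<in> S" for j
  proof -
    have jm: "j < m" using that by (simp add: S_def)
    have "of_nat (v js) / of_nat (m - js) \<le> (of_nat (v j) / of_nat (m - j) :: rat)"
      using js(2)[OF that] by (simp add: f_def)
    hence "of_nat (v js) * of_nat (m - j) \<le> (of_nat (v j) * of_nat (m - js) :: rat)"
      using jm jsm by (simp add: divide_le_eq le_divide_eq field_simps)
    hence "of_nat (v js * (m - j)) \<le> (of_nat (v j * (m - js)) :: rat)" by simp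
    thus ?thesis by (simp only: of_nat_le_iff)
  qed
  define g where "g = gcd (v js) (m - js)"
  have gpos: "g > 0" using vpos[OF js(1)] by (simp add: g_def)
  define a where "a = v js div g"
  define b where "b = (m - js) div g"
  have ga: "v js = g * a" by (simp add: a_def g_def)
  have gb: "m - js = g * b" by (simp add: b_def g_def)
  have apos: "a > 0" using ga vpos[OF js(1)] by (cases a) auto
  have bpos: "b > 0" using gb jsm by (cases b) auto
  have cop: "coprime a b" unfolding a_def b_def g_def using vpos[OF js(1)] by (intro div_gcd_coprime) auto
  have key1: "a * (m - j) \<le> b * v j" if "j \<in> S" for j
  proof -
    have "g * (a * (m - j)) \<le> g * (b * v j)"
      using cross[OF that] ga gb by (simp add: algebra_simps)
    thus ?thesis using gpos by simp
  qed
  have key2: "a * (m - js) = b * v js" using ga gb by (simp add: algebra_simps)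
  define N where "N = degree F"
  have Fm: "coeff F m \<noteq> 0" using mu by (auto simp: mult0_def)
  have mN: "m \<le> N" using Fm by (simp add: N_def le_degree)
  define T where "T j = (coeff F j oo fps_X ^ b) * fps_X ^ (a * j)" for j
  have Tnth: "T j $ i = (if i < a * j then 0 else if b dvd (i - a * j) then coeff F j $ ((i - a * j) div b) else 0)" for i j
    by (simp add: T_def mult.commute[of _ "fps_X ^ _"] fps_X_power_mult_nth fps_nth_compose_X_power)
  have Tlow: "T j $ i = 0" if "i < a * m" for i j
  proof (cases "j < m \<and> coeff F j \<noteq> 0")
    case False
    show ?thesis
    proof (cases "j < m")
      case True
      with False have "coeff F j = 0" by simp
      thus ?thesis by (simp only: Tnth) simp
    next
      case False
      hence "a * m \<le> a * j" by simp
      hence "i < a * j" using that by linarith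
      thus ?thesis by (simp only: Tnth if_True)
    qed
  next
    case True
    hence jS: "j \<in> S" by (simp add: S_def)
    show ?thesis
    proof (cases "i < a * j")
      case True thus ?thesis by (simp only: Tnth if_True)
    next
      case False
      have e1: "a * (m - j) = a * m - a * j" by (rule diff_mult_distrib2)
      have "i - a * j < a * (m - j)" using that False e1 by linarith
      also have "\<dots> \<le> v j * b" using key1[OF jS] by (simp only: mult.commute[of b])
      finally have "(i - a * j) div b < v j" by (rule less_mult_imp_div_less)
      hence "coeff F j $ ((i - a * j) div b) = 0" unfolding v_def by (rule nth_less_subdegree_zero)
      thus ?thesis using False by (simp only: Tnth if_False if_True) simp
    qed
  qed
  define s where "s j = fps_shift (a * m) (T j)" for j
  have sT: "fps_X ^ (a * m) * s j = T j" for j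
    by (rule fps_ext) (simp add: fps_X_power_mult_nth s_def Tlow)
  have s0: "s j $ 0 = T j $ (a * m)" for j by (simp add: s_def)
  define \<phi> where "\<phi> = (\<Sum>j\<le>N. monom (s j $ 0) j)"
  have cphi: "coeff \<phi> j = (if j \<le> N then s j $ 0 else 0)" for j
    by (simp add: \<phi>_def coeff_sum coeff_monom)
  have phim: "coeff \<phi> m \<noteq> 0"
    using mN mu by (simp add: cphi s0 Tnth mult0_def)
  have phijs: "coeff \<phi> js \<noteq> 0"
  proof -
    have le: "a * js \<le> a * m" using jsm by simp
    have d: "a * m - a * js = b * v js" using key2 by (simp add: diff_mult_distrib2)
    have "coeff F js \<noteq> 0" using js(1) by (simp add: S_def)
    hence "coeff F js $ v js \<noteq> 0" by (simp add: v_def nth_subdegree_nonzero)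
    thus ?thesis using jsm mN le d bpos by (simp add: cphi s0 Tnth)
  qed
  have phihigh: "coeff \<phi> j = 0" if "j > m" for j
  proof -
    have "a * m < a * j" using that apos by simp
    thus ?thesis by (simp add: cphi s0 Tnth)
  qed
  have degphi: "degree \<phi> = m"
  proof (rule antisym)
    show "degree \<phi> \<le> m" using phihigh by (intro degree_le) auto
    show "m \<le> degree \<phi>" using phim by (rule le_degree)
  qed
  have bdiv: "b dvd a" if "coeff \<phi> (m - 1) \<noteq> 0"
  proof -
    have le: "a * (m - 1) \<le> a * m" by simp
    have d: "a * m - a * (m - 1) = a" using m by (simp add: diff_mult_distrib2)
    have "m - 1 \<le> N" using mN by simp
    hence "T (m - 1) $ (a * m) \<noteq> 0" using that by (simp add: cphi s0)
    thus ?thesis using le d by (simp add: Tnth split: if_splits)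
  qed
  obtain c where c: "c \<noteq> 0" "0 < order c \<phi>" "order c \<phi> \<le> m"
    "order c \<phi> = m \<longrightarrow> coeff \<phi> (m - 1) \<noteq> 0"
    using edge_root[OF ac degphi jsm phijs] by blast
  define m1 where "m1 = order c \<phi>"
  have b1: "b = 1" if "m1 = m"
  proof -
    have "b dvd a" using bdiv c(4) that by (simp add: m1_def)
    hence "b dvd gcd a b" by simp
    thus ?thesis using cop by (simp add: coprime_iff_gcd_eq_1)
  qed
  define G where "G = (\<Sum>j\<le>N. smult (s j) ([:fps_const c, 1:] ^ j))"
  have sid: "substid F a b c m G"
  proof -
    define Fb where "Fb = map_poly (\<lambda>q. q oo fps_X ^ b) F"
    have dFb: "degree Fb \<le> N" unfolding Fb_def N_def by (rule degree_map_poly_le0) simp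
    have cFb: "coeff Fb j = coeff F j oo fps_X ^ b" for j by (simp add: Fb_def coeff_map_poly)
    have Q: "[: fps_const c * fps_X ^ a, fps_X ^ a :] = smult (fps_X ^ a) [:fps_const c, 1:]"
      by (simp add: mult.commute)
    have "pcompose Fb [: fps_const c * fps_X ^ a, fps_X ^ a :]
        = (\<Sum>j\<le>N. smult (coeff Fb j) ([: fps_const c * fps_X ^ a, fps_X ^ a :] ^ j))"
      by (rule pcompose_as_sum'[OF dFb])
    also have "\<dots> = (\<Sum>j\<le>N. smult (fps_X ^ (a * m)) (smult (s j) ([:fps_const c, 1:] ^ j)))"
    proof (rule sum.cong[OF refl])
      fix j
      have "smult (coeff Fb j) ([: fps_const c * fps_X ^ a, fps_X ^ a :] ^ j)
          = smult (coeff Fb j * fps_X ^ (a * j)) ([:fps_const c, 1:] ^ j)"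
        by (subst Q) (simp only: smult_power smult_smult power_mult)
      also have "coeff Fb j * fps_X ^ (a * j) = fps_X ^ (a * m) * s j" by (simp add: cFb sT T_def)
      finally show "smult (coeff Fb j) ([: fps_const c * fps_X ^ a, fps_X ^ a :] ^ j)
          = smult (fps_X ^ (a * m)) (smult (s j) ([:fps_const c, 1:] ^ j))" by simp
    qed
    also have "\<dots> = smult (fps_X ^ (a * m)) G" by (simp add: G_def smult_sum_right)
    finally show ?thesis by (simp add: substid_def Fb_def)
  qed
  have ev: "map_poly (\<lambda>q. q $ 0) G = pcompose \<phi> [:c, 1:]"
  proof -
    have h0: "(\<lambda>q::'a fps. q $ 0) 0 = 0" by simp
    have hadd: "\<And>x y. (\<lambda>q::'a fps. q $ 0) (x + y) = (\<lambda>q. q $ 0) x + (\<lambda>q. q $ 0) y" by simp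
    have hmult: "\<And>x y. (\<lambda>q::'a fps. q $ 0) (x * y) = (\<lambda>q. q $ 0) x * (\<lambda>q. q $ 0) y" by simp
    have h1: "(\<lambda>q::'a fps. q $ 0) 1 = 1" by simp
    have lin: "map_poly (\<lambda>q. q $ 0) [:fps_const c, 1:] = [:c, 1:]" by (simp add: map_poly_pCons)
    have "map_poly (\<lambda>q. q $ 0) G = (\<Sum>j\<le>N. smult (s j $ 0) ([:c, 1:] ^ j))"
      unfolding G_def
      by (simp add: map_poly_hom_sum[OF h0 hadd] map_poly_smult[OF h0 hmult]
          map_poly_hom_power[OF h0 h1 hadd hmult] lin)
    also have "\<dots> = pcompose \<phi> [:c, 1:]"
      by (simp add: \<phi>_def pcompose_sum pcompose_monom)
    finally show ?thesis .
  qed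
  have phinz: "\<phi> \<noteq> 0" using phim by auto
  have psinz: "pcompose \<phi> [:c, 1:] \<noteq> 0" using phinz by (simp add: pcompose_eq_0_iff)
  have ordpsi: "order 0 (pcompose \<phi> [:c, 1:]) = m1"
    using order_pcompose_shift[OF phinz] by (simp add: m1_def)
  have cG: "coeff G k $ 0 = coeff (pcompose \<phi> [:c, 1:]) k" for k
    by (simp flip: ev add: coeff_map_poly)
  have mG: "mult0 G m1"
    unfolding mult0_def cG using ord_coeffs[OF psinz] ordpsi by auto
  show ?thesis
    using apos bpos c(2,3) b1 mG sid by (intro exI[of _ a] exI[of _ b] exI[of _ c] exI[of _ G] exI[of _ m1]) (auto simp: m1_def)
qed


lemma map_poly_compX1: "map_poly (\<lambda>q. q oo fps_X ^ 1) F = (F :: 'a::field fps poly)"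
  by (simp add: fps_compose_fps_X map_poly_idI)

theorem puiseux_local:
  fixes F :: "'a::field_char_0 fps poly"
  assumes ac: "alg_closed TYPE('a)" and m: "m > 0" and mu: "mult0 F m"
  shows "\<exists>n y. sol F n y"
  using m mu
proof (induction m arbitrary: F rule: less_induct)
  case (less m F)
  show ?case
  proof (rule ccontr)
    assume nosol: "\<not> (\<exists>n y. sol F n y)"
    define NS where "NS = {G :: 'a fps poly. mult0 G m \<and> \<not> (\<exists>n y. sol G n y)}"
    have FNS: "F \<in> NS" using less nosol by (simp add: NS_def)
    have stepNS: "\<exists>t. fst (snd t) > 0 \<and> substid G (fst (snd t)) 1 (snd (snd t)) m (fst t) \<and> fst t \<in> NS"
      if G: "G \<in> NS" for G
    proof -
      have G0: "coeff G 0 \<noteq> 0"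
      proof
        assume "coeff G 0 = 0"
        hence "sol G 1 0" by (simp add: sol_def poly_0_coeff_0 coeff_map_poly)
        moreover have "\<not> (\<exists>n y. sol G n y)" using G by (simp add: NS_def)
        ultimately show False by blast
      qed
      have Gm: "mult0 G m" using G by (simp add: NS_def)
      obtain a b c G' m1 where
        st0: "a > 0 \<and> b > 0 \<and> 0 < m1 \<and> m1 \<le> m \<and> (m1 = m \<longrightarrow> b = 1) \<and> mult0 G' m1 \<and> substid G a b c m G'"
        using newton_step[OF ac less(2) Gm G0] by (elim exE) (rule that)
      hence st: "a > 0" "b > 0" "0 < m1" "m1 \<le> m" "m1 = m \<longrightarrow> b = 1" "mult0 G' m1" "substid G a b c m G'"
        by auto
      have nsG': "\<not> (\<exists>n y. sol G' n y)"
      proof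
        assume "\<exists>n y. sol G' n y"
        then obtain n y where sy: "sol G' n y" by blast
        have "\<not> (\<exists>n y. sol G n y)" using G by (simp add: NS_def)
        with lift_sol[OF st(1,2,7) sy] show False by blast
      qed
      have "m1 = m"
      proof (rule ccontr)
        assume "m1 \<noteq> m"
        hence "m1 < m" using st by simp
        from less(1)[OF this st(3) st(6)] nsG' show False by blast
      qed
      have "b = 1" using st(5) \<open>m1 = m\<close> by blast
      have "G' \<in> NS" unfolding NS_def using st(6) nsG' \<open>m1 = m\<close> by blast
      hence "a > 0 \<and> substid G a 1 c m G' \<and> G' \<in> NS" using st(1,7) \<open>b = 1\<close> by blast
      thus ?thesis by (intro exI[of _ "(G', a, c)"]) simp
    qed
    define S where "S = rec_nat (F, 1, 0) (\<lambda>k s. SOME t. fst (snd t) > 0 \<and> substid (fst s) (fst (snd t)) 1 (snd (snd t)) m (fst t) \<and> fst t \<in> NS)"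
    have S0: "S 0 = (F, 1, 0)" by (simp add: S_def)
    have SS: "S (Suc k) = (SOME t. fst (snd t) > 0 \<and> substid (fst (S k)) (fst (snd t)) 1 (snd (snd t)) m (fst t) \<and> fst t \<in> NS)" for k
      by (simp add: S_def)
    have inv: "fst (S k) \<in> NS" for k
    proof (induction k)
      case 0 then show ?case using FNS S0 by simp
    next
      case (Suc k)
      from someI_ex[OF stepNS[OF Suc]] show ?case by (simp add: SS)
    qed
    have props: "fst (snd (S (Suc k))) > 0 \<and> substid (fst (S k)) (fst (snd (S (Suc k)))) 1 (snd (snd (S (Suc k)))) m (fst (S (Suc k)))" for k
      using someI_ex[OF stepNS[OF inv[of k]]] by (simp add: SS)
    have "\<exists>y. y $ 0 = 0 \<and> poly (fst (S 0)) y = 0"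
    proof (rule limit_sol[of m "\<lambda>k. fst (snd (S (Suc k)))" "\<lambda>k. fst (S k)" "\<lambda>k. snd (snd (S (Suc k)))"])
      show "m > 0" using less by simp
      show "\<And>k. 0 < fst (snd (S (Suc k)))" using props by blast
      fix k
      show "pcompose (fst (S k)) [: fps_const (snd (snd (S (Suc k)))) * fps_X ^ fst (snd (S (Suc k))), fps_X ^ fst (snd (S (Suc k))) :]
                   = smult (fps_X ^ (fst (snd (S (Suc k))) * m)) (fst (S (Suc k)))"
        using props[of k] by (simp add: substid_def map_poly_compX1)
    qed
    then obtain y where "y $ 0 = 0" "poly F y = 0" using S0 by auto
    hence "sol F 1 y" by (simp add: sol_def map_poly_compX1)
    thus False using nosol by blast
  qed
qed


definition ev1 :: "'a::field poly \<Rightarrow> 'a fls \<Rightarrow> 'a fls" where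
  "ev1 w Z = poly (map_poly fls_const w) Z"

lemma fls_const_hom:
  "fls_const (0::'a::field) = 0" "fls_const (1::'a::field) = 1"
  "\<And>x y::'a::field. fls_const (x + y) = fls_const x + fls_const y"
  "\<And>x y::'a::field. fls_const (x * y) = fls_const x * fls_const y"
  "\<And>x y::'a::field. fls_const (x - y) = fls_const x - fls_const y"
  by (simp_all add: fls_plus_const fls_const_mult_const fls_minus_const)

lemma ev1_add: "ev1 (u + v) Z = ev1 u Z + ev1 v Z"
  unfolding ev1_def by (subst map_poly_hom_add[OF fls_const_hom(1,3)]) (rule poly_add)
lemma ev1_diff: "ev1 (u - v) Z = ev1 u Z - ev1 v Z"
  unfolding ev1_def by (subst map_poly_hom_diff[OF fls_const_hom(1,5)]) (rule poly_diff)
lemma ev1_mult: "ev1 (u * v) Z = ev1 u Z * ev1 v Z"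
  unfolding ev1_def by (subst map_poly_hom_mult[OF fls_const_hom(1,3,4)]) (rule poly_mult)
lemma ev1_power: "ev1 (u ^ n) Z = ev1 u Z ^ n"
proof (induction n)
  case 0 show ?case by (simp add: ev1_def map_poly_pCons fls_const_0 fls_const_1)
next
  case (Suc n) thus ?case by (simp add: ev1_mult)
qed
lemma ev1_const: "ev1 [:c:] Z = fls_const c"
  by (simp add: ev1_def map_poly_pCons fls_const_0)
lemma ev1_0: "ev1 0 Z = 0" by (simp add: ev1_def)
lemma ev1_linear: "ev1 [:-c, 1:] Z = Z - fls_const c"
proof -
  have "fls_const (-c) = - fls_const c" by (metis fls_minus_const fls_const_0 diff_0)
  thus ?thesis by (simp add: ev1_def map_poly_pCons fls_const_0 fls_const_1)
qed

lemma fls_neg_iff: "fls_subdegree Z < 0 \<longleftrightarrow> (\<exists>i<0. fls_nth Z i \<noteq> 0)"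
proof
  assume "fls_subdegree Z < 0"
  moreover hence "Z \<noteq> 0" by auto
  ultimately show "\<exists>i<0. fls_nth Z i \<noteq> 0" by (intro exI[of _ "fls_subdegree Z"]) auto
next
  assume "\<exists>i<0. fls_nth Z i \<noteq> 0"
  then obtain i where "i < 0" "fls_nth Z i \<noteq> 0" by blast
  thus "fls_subdegree Z < 0" using fls_subdegree_leI[of Z i] by simp
qed

lemma fls_nonneg_iff: "\<not> fls_subdegree Z < 0 \<longleftrightarrow> (\<forall>i<0. fls_nth Z i = 0)"
  using fls_neg_iff by blast

lemma valC:
  fixes e0 :: "'a::field fps"
  assumes "e0 $ 0 = 0"
  shows "\<exists>W. ev1 w (fls_const c + fps_to_fls e0) = fps_to_fls W \<and> W $ 0 = poly w c"
proof (induction w)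
  case 0 then show ?case by (intro exI[of _ 0]) (simp add: ev1_def)
next
  case (pCons a w)
  then obtain W where W: "ev1 w (fls_const c + fps_to_fls e0) = fps_to_fls W" "W $ 0 = poly w c" by blast
  have "ev1 (pCons a w) (fls_const c + fps_to_fls e0)
      = fls_const a + (fls_const c + fps_to_fls e0) * ev1 w (fls_const c + fps_to_fls e0)"
    by (simp add: ev1_def map_poly_pCons)
  also have "\<dots> = fps_to_fls (fps_const a + (fps_const c + e0) * W)"
    by (simp add: W fls_times_fps_to_fls fps_to_fls_plus fps_const_to_fls)
  finally show ?case using assms W(2) by (intro exI[of _ "fps_const a + (fps_const c + e0) * W"]) simp
qed

definition padrev :: "nat \<Rightarrow> 'a::comm_semiring_1 poly \<Rightarrow> 'a poly" where
  "padrev d w = (\<Sum>i\<le>d. monom (coeff w i) (d - i))"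

lemma coeff_padrev: "coeff (padrev d w) k = (if k \<le> d then coeff w (d - k) else 0)"
proof -
  have "coeff (padrev d w) k = (\<Sum>i\<le>d. if d - i = k then coeff w i else 0)"
    by (simp add: padrev_def coeff_sum coeff_monom)
  also have "\<dots> = (if k \<le> d then coeff w (d - k) else 0)"
  proof (cases "k \<le> d")
    case True
    have "(\<Sum>i\<le>d. if d - i = k then coeff w i else 0) = (\<Sum>i\<le>d. if i = d - k then coeff w i else 0)"
      using True by (intro sum.cong) auto
    also have "\<dots> = coeff w (d - k)" by (simp add: sum.delta)
    finally show ?thesis using True by simp
  next
    case False
    thus ?thesis by (intro trans[OF sum.neutral]) auto
  qed
  finally show ?thesis .
qed

lemma padrev_poly:
  fixes z :: "'b::field"
  assumes z: "z \<noteq> 0" and d: "degree w \<le> d"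
  shows "poly w (inverse z) = inverse z ^ d * poly (padrev d w) z"
proof -
  have "poly w (inverse z) = (\<Sum>i\<le>d. coeff w i * inverse z ^ i)"
    using d by (simp add: poly_altdef) (intro sum.mono_neutral_left, auto simp: coeff_eq_0)
  also have "\<dots> = (\<Sum>i\<le>d. inverse z ^ d * (coeff w i * z ^ (d - i)))"
  proof (rule sum.cong[OF refl])
    fix i assume "i \<in> {..d}"
    hence e1: "inverse z ^ d = inverse z ^ i * inverse z ^ (d - i)" by (simp flip: power_add)
    have e2: "inverse z ^ (d - i) * z ^ (d - i) = 1" using z by (simp flip: power_mult_distrib)
    have "inverse z ^ d * (coeff w i * z ^ (d - i)) = coeff w i * inverse z ^ i * (inverse z ^ (d - i) * z ^ (d - i))"
      unfolding e1 by (simp only: mult_ac)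
    thus "coeff w i * inverse z ^ i = inverse z ^ d * (coeff w i * z ^ (d - i))"
      unfolding e2 by (simp only: mult_1_right)
  qed
  also have "\<dots> = inverse z ^ d * poly (padrev d w) z"
    by (simp add: padrev_def poly_sum poly_monom sum_distrib_left)
  finally show ?thesis .
qed

lemma map_padrev: "h 0 = 0 \<Longrightarrow> map_poly h (padrev d w) = padrev d (map_poly h w)"
  by (intro poly_eqI) (simp add: coeff_map_poly coeff_padrev)

lemma degree_padrev: "degree (padrev d w) \<le> d"
  by (rule degree_le) (simp add: coeff_padrev)


lemma small_series:
  fixes \<epsilon> :: "'a::field fls"
  assumes "fls_subdegree \<epsilon> > 0"
  shows "\<exists>e0. \<epsilon> = fps_to_fls e0 \<and> e0 $ 0 = 0"
proof -
  have e: "fps_to_fls (fls_regpart \<epsilon>) = \<epsilon>" using assms by (intro fls_regpart_to_fls_trivial) simp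
  have "fls_nth (fps_to_fls (fls_regpart \<epsilon>)) 0 = 0" using e assms by simp
  hence "fls_regpart \<epsilon> $ 0 = 0" by (simp add: fps_to_fls_nth)
  thus ?thesis using e by metis
qed

lemma valC_nz:
  fixes \<epsilon> :: "'a::field fls"
  assumes "fls_subdegree \<epsilon> > 0" "poly w c \<noteq> 0"
  shows "ev1 w (fls_const c + \<epsilon>) \<noteq> 0 \<and> fls_subdegree (ev1 w (fls_const c + \<epsilon>)) = 0"
proof -
  obtain e0 where e0: "\<epsilon> = fps_to_fls e0" "e0 $ 0 = 0" using small_series[OF assms(1)] by blast
  obtain W where W: "ev1 w (fls_const c + fps_to_fls e0) = fps_to_fls W" "W $ 0 = poly w c"
    using valC[OF e0(2)] by blast
  have "W \<noteq> 0" using W(2) assms(2) by auto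
  moreover have "subdegree W = 0" using W(2) assms(2) by (simp add: subdegree_eq_0_iff)
  ultimately show ?thesis using W(1) e0(1) by (simp add: fls_subdegree_fls_to_fps)
qed

lemma ev1_val:
  fixes \<phi> :: "'a::field fls"
  assumes neg: "fls_subdegree \<phi> < 0" and w: "w \<noteq> 0"
  shows "ev1 w (moeb_inv s \<phi>) \<noteq> 0 \<and> fls_subdegree (ev1 w (moeb_inv s \<phi>)) =
    (case s of None \<Rightarrow> int (degree w) * fls_subdegree \<phi> | Some c \<Rightarrow> - int (order c w) * fls_subdegree \<phi>)"
proof -
  have phinz: "\<phi> \<noteq> 0" using neg by auto
  define \<epsilon> where "\<epsilon> = inverse \<phi>"
  have eps: "fls_subdegree \<epsilon> > 0" using neg by (simp add: \<epsilon>_def fls_inverse_subdegree)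
  have epsnz: "\<epsilon> \<noteq> 0" using phinz by (simp add: \<epsilon>_def)
  show ?thesis
  proof (cases s)
    case (Some c)
    obtain w1 where w1: "w = [:-c,1:] ^ order c w * w1" "\<not> [:-c,1:] dvd w1"
      using order_decomp[OF w] by blast
    have pw1: "poly w1 c \<noteq> 0" using w1(2) by (simp add: poly_eq_0_iff_dvd)
    have Z: "moeb_inv s \<phi> = fls_const c + \<epsilon>" by (simp add: Some moeb_inv_def \<epsilon>_def)
    have "ev1 w (moeb_inv s \<phi>) = \<epsilon> ^ order c w * ev1 w1 (fls_const c + \<epsilon>)"
      by (subst w1(1)) (simp add: Z ev1_mult ev1_power ev1_linear)
    moreover have "ev1 w1 (fls_const c + \<epsilon>) \<noteq> 0 \<and> fls_subdegree (ev1 w1 (fls_const c + \<epsilon>)) = 0"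
      by (rule valC_nz[OF eps pw1])
    ultimately show ?thesis using epsnz
      by (simp add: Some fls_subdegree_pow \<epsilon>_def fls_inverse_subdegree)
  next
    case None
    define d where "d = degree w"
    have dm: "degree (map_poly fls_const w) = d" by (simp add: d_def degree_map_poly)
    have "ev1 w (moeb_inv s \<phi>) = poly (map_poly fls_const w) (inverse \<epsilon>)"
      by (simp add: None moeb_inv_def ev1_def \<epsilon>_def)
    also have "\<dots> = inverse \<epsilon> ^ d * poly (padrev d (map_poly fls_const w)) \<epsilon>"
      by (rule padrev_poly[OF epsnz]) (simp add: dm)
    also have "poly (padrev d (map_poly fls_const w)) \<epsilon> = ev1 (padrev d w) (fls_const 0 + \<epsilon>)"
      by (simp add: ev1_def map_padrev fls_const_0)
    finally have eq: "ev1 w (moeb_inv s \<phi>) = \<phi> ^ d * ev1 (padrev d w) (fls_const 0 + \<epsilon>)"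
      by (simp add: \<epsilon>_def)
    have "poly (padrev d w) 0 \<noteq> 0" using w by (simp add: poly_0_coeff_0 coeff_padrev d_def)
    hence "ev1 (padrev d w) (fls_const 0 + \<epsilon>) \<noteq> 0 \<and> fls_subdegree (ev1 (padrev d w) (fls_const 0 + \<epsilon>)) = 0"
      by (rule valC_nz[OF eps])
    thus ?thesis using eq phinz by (simp add: None fls_subdegree_pow d_def)
  qed
qed

definition evf :: "'a::field poly fract \<Rightarrow> 'a fls \<Rightarrow> 'a fls" where
  "evf f Z = (SOME R. \<exists>u v. v \<noteq> 0 \<and> f = Fract u v \<and> R = ev1 u Z / ev1 v Z)"

definition transc :: "'a::field fls \<Rightarrow> bool" where
  "transc Z \<longleftrightarrow> (\<forall>w. w \<noteq> 0 \<longrightarrow> ev1 w Z \<noteq> 0)"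

lemma transc_moeb: "fls_subdegree \<phi> < 0 \<Longrightarrow> transc (moeb_inv s \<phi>)"
  using ev1_val by (auto simp: transc_def)

lemma rep_indep:
  assumes tr: "transc Z" and v: "v \<noteq> 0" and v': "v' \<noteq> 0" and eq: "Fract u v = Fract u' v'"
  shows "ev1 u Z / ev1 v Z = ev1 u' Z / ev1 v' Z"
proof -
  have "u' * v = u * v'" using eq v v' by (simp add: eq_fract)
  hence "ev1 u' Z * ev1 v Z = ev1 u Z * ev1 v' Z" by (simp flip: ev1_mult)
  moreover have "ev1 v Z \<noteq> 0" "ev1 v' Z \<noteq> 0" using tr v v' by (auto simp: transc_def)
  ultimately show ?thesis by (simp add: field_simps)
qed

lemma evf_rep:
  assumes tr: "transc Z" and v: "v \<noteq> 0" and f: "f = Fract u v"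
  shows "evf f Z = ev1 u Z / ev1 v Z"
proof -
  have ex: "\<exists>R. \<exists>u v. v \<noteq> 0 \<and> f = Fract u v \<and> R = ev1 u Z / ev1 v Z"
    using v f by blast
  from someI_ex[OF ex] obtain u' v' where uv: "v' \<noteq> 0" "f = Fract u' v'" "evf f Z = ev1 u' Z / ev1 v' Z"
    unfolding evf_def by blast
  thus ?thesis using rep_indep[OF tr v uv(1)] f by simp
qed

lemma pole_rep:
  assumes neg: "fls_subdegree \<phi> < 0" and v: "v \<noteq> 0" and u: "u \<noteq> 0"
  shows "(case s of None \<Rightarrow> degree u > degree v | Some c \<Rightarrow> order c v > order c u)
     \<longleftrightarrow> fls_subdegree (ev1 u (moeb_inv s \<phi>) / ev1 v (moeb_inv s \<phi>)) < 0"
proof -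
  have U: "ev1 u (moeb_inv s \<phi>) \<noteq> 0" and V: "ev1 v (moeb_inv s \<phi>) \<noteq> 0"
    using ev1_val[OF neg u] ev1_val[OF neg v] by auto
  have eq: "fls_subdegree (ev1 u (moeb_inv s \<phi>) / ev1 v (moeb_inv s \<phi>)) =
     fls_subdegree (ev1 u (moeb_inv s \<phi>)) - fls_subdegree (ev1 v (moeb_inv s \<phi>))"
    by (rule fls_divide_subdegree[OF U V])
  show ?thesis
  proof (cases s)
    case None
    have "fls_subdegree (ev1 u (moeb_inv s \<phi>) / ev1 v (moeb_inv s \<phi>)) =
       fls_subdegree \<phi> * (int (degree u) - int (degree v))"
      using eq ev1_val[OF neg u, of s] ev1_val[OF neg v, of s] None by (simp add: algebra_simps)
    thus ?thesis using neg None by (simp add: mult_less_0_iff)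
  next
    case (Some c)
    have "fls_subdegree (ev1 u (moeb_inv s \<phi>) / ev1 v (moeb_inv s \<phi>)) =
       fls_subdegree \<phi> * (int (order c v) - int (order c u))"
      using eq ev1_val[OF neg u, of s] ev1_val[OF neg v, of s] Some by (simp add: algebra_simps)
    thus ?thesis using neg Some by (simp add: mult_less_0_iff)
  qed
qed

lemma pole_crit:
  assumes neg: "fls_subdegree \<phi> < 0"
  shows "is_pole_1 f s \<longleftrightarrow> fls_subdegree (evf f (moeb_inv s \<phi>)) < 0"
proof -
  have tr: "transc (moeb_inv s \<phi>)" by (rule transc_moeb[OF neg])
  show ?thesis
  proof
    assume "is_pole_1 f s"
    then obtain u v where uv: "v \<noteq> 0" "u \<noteq> 0" "f = Fract u v"
      "case s of None \<Rightarrow> degree u > degree v | Some c \<Rightarrow> order c v > order c u"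
      by (auto simp: is_pole_1_def)
    thus "fls_subdegree (evf f (moeb_inv s \<phi>)) < 0"
      using pole_rep[OF neg uv(1,2)] evf_rep[OF tr uv(1,3)] by simp
  next
    assume A: "fls_subdegree (evf f (moeb_inv s \<phi>)) < 0"
    obtain u v where f: "f = Fract u v" and v: "v \<noteq> 0" by (cases f) auto
    have ev: "evf f (moeb_inv s \<phi>) = ev1 u (moeb_inv s \<phi>) / ev1 v (moeb_inv s \<phi>)"
      by (rule evf_rep[OF tr v f])
    have u: "u \<noteq> 0"
    proof
      assume "u = 0"
      hence "evf f (moeb_inv s \<phi>) = 0" by (simp add: ev ev1_0)
      thus False using A by simp
    qed
    have "case s of None \<Rightarrow> degree u > degree v | Some c \<Rightarrow> order c v > order c u"
      using pole_rep[OF neg v u] A by (simp add: ev)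
    thus "is_pole_1 f s" using u v f by (auto simp: is_pole_1_def)
  qed
qed


lemma field_poly_unit_iff: "is_unit (c :: 'a::field poly) \<longleftrightarrow> c \<noteq> 0 \<and> degree c = 0"
  by (auto simp: is_unit_poly_iff dvd_field_iff elim!: degree_eq_zeroE)

lemma prime_factor_exists:
  fixes c :: "'a::field poly"
  assumes "degree c > 0"
  shows "\<exists>\<pi> c'. prime_elem \<pi> \<and> c = \<pi> * c' \<and> degree c' < degree c"
proof -
  have cnz: "c \<noteq> 0" using assms by auto
  define P where "P n \<longleftrightarrow> (\<exists>d. d dvd c \<and> degree d > 0 \<and> degree d = n)" for n
  have "P (degree c)" using assms unfolding P_def by (intro exI[of _ c]) auto
  then obtain n where n: "P n" "\<And>k. P k \<Longrightarrow> n \<le> k" using ex_has_least_nat[of P "degree c" id] by auto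
  then obtain \<pi> where pi: "\<pi> dvd c" "degree \<pi> > 0" "degree \<pi> = n" by (auto simp: P_def)
  have pinz: "\<pi> \<noteq> 0" using pi by auto
  have irr: "irreducible \<pi>"
  proof (rule irreducibleI)
    show "\<pi> \<noteq> 0" by (rule pinz)
    show "\<not> is_unit \<pi>" using pi by (simp add: field_poly_unit_iff)
    fix a b assume ab: "\<pi> = a * b"
    show "is_unit a \<or> is_unit b"
    proof (rule ccontr)
      assume "\<not> (is_unit a \<or> is_unit b)"
      moreover have "a \<noteq> 0" "b \<noteq> 0" using ab pinz by auto
      ultimately have da: "degree a > 0" and db: "degree b > 0" by (auto simp: field_poly_unit_iff)
      have "degree \<pi> = degree a + degree b" using ab \<open>a \<noteq> 0\<close> \<open>b \<noteq> 0\<close> by (simp add: degree_mult_eq)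
      hence "degree a < n" using db pi by simp
      moreover have "a dvd c" using ab pi(1) by (metis dvd_mult_left)
      hence "P (degree a)" using da by (auto simp: P_def)
      ultimately show False using n(2) by fastforce
    qed
  qed
  obtain c' where c': "c = \<pi> * c'" using pi(1) by (elim dvdE)
  have "c' \<noteq> 0" using c' cnz by auto
  hence "degree c = degree \<pi> + degree c'" using c' pinz by (simp add: degree_mult_eq)
  hence "degree c' < degree c" using pi by simp
  thus ?thesis using field_poly_irreducible_imp_prime[OF irr] c' by blast
qed

lemma cancel_const_dvd:
  fixes p A G0 :: "'a::field poly poly"
  assumes irr: "irreducible p" and dp: "degree p > 0" and c: "c \<noteq> 0"
    and eq: "[:c:] * A = p * G0"
  shows "p dvd A"
  using c eq
proof (induction "degree c" arbitrary: c G0 rule: less_induct)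
  case (less c G0)
  show ?case
  proof (cases "degree c = 0")
    case True
    then obtain k where k: "c = [:k:]" "k \<noteq> 0" using less(2) by (auto elim!: degree_eq_zeroE)
    have "A = p * (smult [:inverse k:] G0)"
    proof -
      have h: "smult [:inverse k:] ([:c:] * A) = A" using k by (simp add: smult_smult flip: one_pCons)
      have "A = smult [:inverse k:] (p * G0)" using h less(3) by (simp only:)
      thus "A = p * (smult [:inverse k:] G0)" by (simp only: mult_smult_right)
    qed
    thus ?thesis by (rule dvdI)
  next
    case False
    then obtain \<pi> c' where pc: "prime_elem \<pi>" "c = \<pi> * c'" "degree c' < degree c"
      using prime_factor_exists[of c] by auto
    have pr: "prime_elem [:\<pi>:]" using pc(1) by (rule lift_prime_elem_poly)
    have cc: "[:c:] = [:\<pi>:] * [:c':]" using pc(2) by simp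
    have eqA: "p * G0 = [:\<pi>:] * ([:c':] * A)" using less(3) cc by (simp only: mult.assoc)
    hence "[:\<pi>:] dvd p * G0" by (rule dvdI)
    hence "[:\<pi>:] dvd p \<or> [:\<pi>:] dvd G0" using pr by (simp add: prime_elem_dvd_mult_iff)
    moreover have "\<not> [:\<pi>:] dvd p"
    proof
      assume "[:\<pi>:] dvd p"
      then obtain p' where p': "p = [:\<pi>:] * p'" by (elim dvdE)
      have "\<not> is_unit [:\<pi>:]" using pr by (simp add: prime_elem_def)
      moreover have "is_unit [:\<pi>:] \<or> is_unit p'" using irreducibleD[OF irr p'] .
      ultimately have "is_unit p'" by blast
      hence "degree p' = 0" by (simp add: is_unit_poly_iff, elim exE, auto)
      hence "degree p = 0" using p' by simp
      thus False using dp by simp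
    qed
    ultimately obtain G1 where G1: "G0 = [:\<pi>:] * G1" by (auto elim: dvdE)
    have pinz: "\<pi> \<noteq> 0" using pc(1) by auto
    have "[:\<pi>:] * ([:c':] * A) = [:\<pi>:] * (p * G1)"
      using eqA G1 by (simp only: mult_ac)
    moreover have "[:\<pi>:] \<noteq> 0" using pinz by simp
    ultimately have "[:c':] * A = p * G1" using mult_left_cancel by blast
    moreover have "c' \<noteq> 0" using less(2) pc(2) by auto
    ultimately show ?thesis using less(1)[OF pc(3)] by blast
  qed
qed


lemma cancel_const_factor:
  fixes p G0 H0 :: "'a::field poly poly"
  assumes c: "c \<noteq> 0" and eq: "[:c:] * p = G0 * H0"
  shows "\<exists>G1 H1. p = G1 * H1 \<and> degree G1 = degree G0 \<and> degree H1 = degree H0"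
  using c eq
proof (induction "degree c" arbitrary: c G0 H0 rule: less_induct)
  case (less c G0 H0)
  show ?case
  proof (cases "degree c = 0")
    case True
    then obtain k where k: "c = [:k:]" "k \<noteq> 0" using less(2) by (auto elim!: degree_eq_zeroE)
    have h: "smult [:inverse k:] ([:c:] * p) = p" using k by (simp add: smult_smult flip: one_pCons)
    have "p = smult [:inverse k:] (G0 * H0)" using h less(3) by (simp only:)
    hence "p = smult [:inverse k:] G0 * H0" by (simp only: mult_smult_left)
    moreover have "degree (smult [:inverse k:] G0) = degree G0" using k by simp
    ultimately show ?thesis by blast
  next
    case False
    then obtain \<pi> c' where pc: "prime_elem \<pi>" "c = \<pi> * c'" "degree c' < degree c"
      using prime_factor_exists[of c] by auto
    have pr: "prime_elem [:\<pi>:]" using pc(1) by (rule lift_prime_elem_poly)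
    have pinz: "[:\<pi>:] \<noteq> 0" using pc(1) by auto
    have cc: "[:c:] = [:\<pi>:] * [:c':]" using pc(2) by simp
    have eqA: "G0 * H0 = [:\<pi>:] * ([:c':] * p)" using less(3) cc by (simp only: mult.assoc)
    hence "[:\<pi>:] dvd G0 * H0" by (rule dvdI)
    hence "[:\<pi>:] dvd G0 \<or> [:\<pi>:] dvd H0" using pr by (simp add: prime_elem_dvd_mult_iff)
    moreover have c'nz: "c' \<noteq> 0" using less(2) pc(2) by auto
    moreover {
      assume "[:\<pi>:] dvd G0"
      then obtain G2 where G2: "G0 = [:\<pi>:] * G2" by (elim dvdE)
      have "[:\<pi>:] * ([:c':] * p) = [:\<pi>:] * (G2 * H0)" using eqA G2 by (simp only: mult_ac)
      hence "[:c':] * p = G2 * H0" using pinz mult_left_cancel by blast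
      from less(1)[OF pc(3) c'nz this] obtain G1 H1 where
        "p = G1 * H1" "degree G1 = degree G2" "degree H1 = degree H0" by blast
      moreover have "degree G2 = degree G0" using G2 pinz by (simp add: pc)
      ultimately have ?thesis by auto
    }
    moreover {
      assume "[:\<pi>:] dvd H0"
      then obtain H2 where H2: "H0 = [:\<pi>:] * H2" by (elim dvdE)
      have "[:\<pi>:] * ([:c':] * p) = [:\<pi>:] * (G0 * H2)" using eqA H2 by (simp only: mult_ac)
      hence "[:c':] * p = G0 * H2" using pinz mult_left_cancel by blast
      from less(1)[OF pc(3) c'nz this] obtain G1 H1 where
        "p = G1 * H1" "degree G1 = degree G0" "degree H1 = degree H2" by blast
      moreover have "degree H2 = degree H0" using H2 pinz by (simp add: pc)
      ultimately have ?thesis by auto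
    }
    ultimately show ?thesis by blast
  qed
qed

lemma clear_denoms:
  fixes G :: "'a::idom fract poly"
  shows "\<exists>c G0. c \<noteq> 0 \<and> fract_poly G0 = smult (to_fract c) G"
proof (induction G)
  case 0 then show ?case by (intro exI[of _ 1] exI[of _ 0]) simp
next
  case (pCons g G)
  then obtain c G0 where cG: "c \<noteq> 0" "fract_poly G0 = smult (to_fract c) G" by blast
  obtain u v where g: "g = Fract u v" "v \<noteq> 0" by (cases g) auto
  have "fract_poly (pCons (u * c) (smult v G0)) = smult (to_fract (v * c)) (pCons g G)"
  proof -
    have "to_fract (u * c) = to_fract (v * c) * g" using g
      by (simp add: to_fract_def mult_fract eq_fract mult_ac)
    moreover have "fract_poly (smult v G0) = smult (to_fract (v * c)) G"
      using cG(2) by (simp add: smult_smult mult_ac)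
    ultimately show ?thesis by (simp add: map_poly_pCons)
  qed
  moreover have "v * c \<noteq> 0" using cG g by simp
  ultimately show ?case by blast
qed

lemma irreducible_fract:
  fixes p :: "'a::field poly poly"
  assumes irr: "irreducible p" and dp: "degree p > 0"
  shows "irreducible (fract_poly p)"
proof (rule irreducibleI)
  have dfp: "degree (fract_poly p) = degree p" by (simp add: degree_map_poly)
  show "fract_poly p \<noteq> 0" using dp by auto
  show "\<not> is_unit (fract_poly p)" using dp dfp by (simp add: field_poly_unit_iff)
  fix a b assume ab: "fract_poly p = a * b"
  show "is_unit a \<or> is_unit b"
  proof (rule ccontr)
    assume nu: "\<not> (is_unit a \<or> is_unit b)"
    have anz: "a \<noteq> 0" and bnz: "b \<noteq> 0" using ab dp by auto
    with nu have da: "degree a > 0" and db: "degree b > 0" by (auto simp: field_poly_unit_iff)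
    obtain c1 a0 where a0: "c1 \<noteq> 0" "fract_poly a0 = smult (to_fract c1) a" using clear_denoms by blast
    obtain c2 b0 where b0: "c2 \<noteq> 0" "fract_poly b0 = smult (to_fract c2) b" using clear_denoms by blast
    have "fract_poly (a0 * b0) = fract_poly ([:c1 * c2:] * p)"
      by (simp add: a0(2) b0(2) ab mult_ac)
    hence eq: "[:c1 * c2:] * p = a0 * b0" by (simp only: fract_poly_eq_iff)
    have "degree a0 = degree a"
    proof -
      have "degree (fract_poly a0) = degree a" using a0 by simp
      thus ?thesis by (simp add: degree_map_poly)
    qed
    moreover have "degree b0 = degree b"
    proof -
      have "degree (fract_poly b0) = degree b" using b0 by simp
      thus ?thesis by (simp add: degree_map_poly)
    qed
    moreover obtain G1 H1 where "p = G1 * H1" "degree G1 = degree a0" "degree H1 = degree b0"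
      using cancel_const_factor[OF _ eq] a0(1) b0(1) by auto
    ultimately have "p = G1 * H1" "degree G1 > 0" "degree H1 > 0" using da db by auto
    moreover have "is_unit G1 \<or> is_unit H1" using irreducibleD[OF irr \<open>p = G1 * H1\<close>] .
    ultimately show False by (auto simp: is_unit_poly_iff)
  qed
qed

lemma irr_prime:
  fixes p :: "'a::field poly poly"
  assumes irr: "irreducible p" and dp: "degree p > 0" and dvd: "p dvd A * B"
  shows "p dvd A \<or> p dvd B"
proof -
  have pr: "prime_elem (fract_poly p)"
    by (rule field_poly_irreducible_imp_prime[OF irreducible_fract[OF irr dp]])
  have "fract_poly p dvd fract_poly A * fract_poly B"
    using fract_poly_dvd[OF dvd] by simp
  hence "fract_poly p dvd fract_poly A \<or> fract_poly p dvd fract_poly B"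
    using pr by (simp add: prime_elem_dvd_mult_iff)
  moreover have "p dvd C" if CC: "fract_poly p dvd fract_poly C" for C
  proof -
    obtain g where g: "fract_poly C = fract_poly p * g" using CC by (elim dvdE)
    obtain c g0 where cg: "c \<noteq> 0" "fract_poly g0 = smult (to_fract c) g" using clear_denoms by blast
    have "fract_poly ([:c:] * C) = fract_poly (p * g0)"
      by (simp add: g cg(2) mult_ac)
    hence "[:c:] * C = p * g0" by (simp only: fract_poly_eq_iff)
    thus ?thesis by (rule cancel_const_dvd[OF irr dp cg(1)])
  qed
  ultimately show ?thesis by blast
qed


lemma eval2_alt: "eval2 q X Y = poly (map_poly (\<lambda>c. ev1 c X) q) Y"
  by (simp add: eval2_def ev1_def)

lemma ev1X_hom:
  "(\<lambda>c. ev1 c X) 0 = 0"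
  "\<And>a b. (\<lambda>c. ev1 c X) (a + b) = (\<lambda>c. ev1 c X) a + (\<lambda>c. ev1 c X) b"
  "\<And>a b. (\<lambda>c. ev1 c X) (a * b) = (\<lambda>c. ev1 c X) a * (\<lambda>c. ev1 c X) b"
  "\<And>a b. (\<lambda>c. ev1 c X) (a - b) = (\<lambda>c. ev1 c X) a - (\<lambda>c. ev1 c X) b"
  by (simp_all add: ev1_0 ev1_add ev1_mult ev1_diff)

lemma eval2_add: "eval2 (A + B) X Y = eval2 A X Y + eval2 B X Y"
  unfolding eval2_alt by (subst map_poly_hom_add[OF ev1X_hom(1,2)]) (rule poly_add)
lemma eval2_diff: "eval2 (A - B) X Y = eval2 A X Y - eval2 B X Y"
  unfolding eval2_alt by (subst map_poly_hom_diff[OF ev1X_hom(1,4)]) (rule poly_diff)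
lemma eval2_mult: "eval2 (A * B) X Y = eval2 A X Y * eval2 B X Y"
  unfolding eval2_alt by (subst map_poly_hom_mult[OF ev1X_hom(1,2,3)]) (rule poly_mult)
lemma eval2_const: "eval2 [:w:] X Y = ev1 w X"
  unfolding eval2_alt by (simp add: map_poly_pCons ev1_0)
lemma eval2_smult: "eval2 (smult w A) X Y = ev1 w X * eval2 A X Y"
proof -
  have "smult w A = [:w:] * A" by simp
  thus ?thesis by (simp only: eval2_mult eval2_const)
qed

lemma eval2_nonvanish:
  fixes p b :: "'a::field poly poly"
  assumes irr: "irreducible p" and dp: "degree p > 0" and pz: "eval2 p X Y = 0"
    and tr: "transc X" and nd: "\<not> p dvd b"
  shows "eval2 b X Y \<noteq> 0"
proof -
  have pnz: "p \<noteq> 0" using dp by auto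
  have claim1: "degree p \<le> degree D" if D: "D \<noteq> 0" "eval2 D X Y = 0" for D
  proof (rule ccontr)
    assume "\<not> degree p \<le> degree D"
    define Q where "Q n \<longleftrightarrow> (\<exists>D. D \<noteq> 0 \<and> eval2 D X Y = 0 \<and> degree D = n)" for n
    have "Q (degree D)" using D by (auto simp: Q_def)
    then obtain n where n: "Q n" "\<And>k. Q k \<Longrightarrow> n \<le> k" using ex_has_least_nat[of Q "degree D" id] by auto
    have nlt: "n < degree p" using n(2)[OF \<open>Q (degree D)\<close>] \<open>\<not> degree p \<le> degree D\<close> by simp
    obtain D0 where D0: "D0 \<noteq> 0" "eval2 D0 X Y = 0" "degree D0 = n" using n(1) by (auto simp: Q_def)
    obtain q r where qr: "pseudo_divmod p D0 = (q, r)" by (cases "pseudo_divmod p D0") auto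
    define k where "k = Suc (degree p) - degree D0"
    have eq: "smult (lead_coeff D0 ^ k) p = D0 * q + r" using pseudo_divmod(1)[OF D0(1) qr] by (simp add: k_def)
    have rdeg: "r = 0 \<or> degree r < degree D0" using pseudo_divmod(2)[OF D0(1) qr] .
    have "eval2 r X Y = 0"
    proof -
      have "eval2 (smult (lead_coeff D0 ^ k) p) X Y = eval2 (D0 * q + r) X Y" by (simp only: eq)
      thus ?thesis by (simp add: eval2_smult eval2_add eval2_mult pz D0(2))
    qed
    have r0: "r = 0"
    proof (rule ccontr)
      assume "r \<noteq> 0"
      hence "Q (degree r)" using \<open>eval2 r X Y = 0\<close> by (auto simp: Q_def)
      hence "n \<le> degree r" by (rule n(2))
      thus False using rdeg \<open>r \<noteq> 0\<close> D0(3) by simp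
    qed
    have lcnz: "lead_coeff D0 ^ k \<noteq> 0" using D0(1) by simp
    have eq2: "D0 * q = p * [:lead_coeff D0 ^ k:]" using eq r0 by (simp add: mult.commute)
    hence "p dvd D0 * q" by (metis dvd_triv_left)
    hence "p dvd D0 \<or> p dvd q" by (rule irr_prime[OF irr dp])
    moreover have "\<not> p dvd D0"
    proof
      assume "p dvd D0"
      hence "degree p \<le> degree D0" using D0(1) by (rule dvd_imp_degree_le)
      thus False using nlt D0(3) by simp
    qed
    ultimately obtain q2 where q2: "q = p * q2" by (auto elim: dvdE)
    have "p * (D0 * q2) = p * [:lead_coeff D0 ^ k:]" using eq2 q2 by (simp add: mult_ac)
    hence e3: "D0 * q2 = [:lead_coeff D0 ^ k:]" using pnz mult_left_cancel by blast
    hence "q2 \<noteq> 0" using lcnz by auto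
    hence "degree D0 = 0" using e3 D0(1) by (metis add_eq_0_iff_both_eq_0 degree_mult_eq degree_pCons_0)
    then obtain w where w: "D0 = [:w:]" by (elim degree_eq_zeroE)
    hence "w \<noteq> 0" using D0(1) by simp
    hence "ev1 w X \<noteq> 0" using tr by (simp add: transc_def)
    thus False using D0(2) w by (simp add: eval2_const)
  qed
  show ?thesis
  proof
    assume bz: "eval2 b X Y = 0"
    obtain q r where qr: "pseudo_divmod b p = (q, r)" by (cases "pseudo_divmod b p") auto
    define k where "k = Suc (degree b) - degree p"
    have eq: "smult (lead_coeff p ^ k) b = p * q + r" using pseudo_divmod(1)[OF pnz qr] by (simp add: k_def)
    have rdeg: "r = 0 \<or> degree r < degree p" using pseudo_divmod(2)[OF pnz qr] .
    have "eval2 r X Y = 0"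
    proof -
      have "eval2 (smult (lead_coeff p ^ k) b) X Y = eval2 (p * q + r) X Y" by (simp only: eq)
      thus ?thesis by (simp add: eval2_smult eval2_add eval2_mult pz bz)
    qed
    have r0: "r = 0"
    proof (rule ccontr)
      assume "r \<noteq> 0"
      hence "degree p \<le> degree r" using claim1 \<open>eval2 r X Y = 0\<close> by blast
      thus False using rdeg \<open>r \<noteq> 0\<close> by simp
    qed
    have "[:lead_coeff p ^ k:] * b = p * q" using eq r0 by simp
    hence "p dvd [:lead_coeff p ^ k:] * b" by (metis dvd_triv_left)
    hence "p dvd [:lead_coeff p ^ k:] \<or> p dvd b" by (rule irr_prime[OF irr dp])
    moreover have "\<not> p dvd [:lead_coeff p ^ k:]"
    proof
      assume "p dvd [:lead_coeff p ^ k:]"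
      moreover have "[:lead_coeff p ^ k:] \<noteq> 0" using pnz by simp
      ultimately have "degree p \<le> degree [:lead_coeff p ^ k:]" by (rule dvd_imp_degree_le)
      thus False using dp by simp
    qed
    ultimately show False using nd by blast
  qed
qed


lemma deg_x_ge: "degree (coeff p j) \<le> deg_x p"
proof (cases "j \<le> degree p")
  case True
  thus ?thesis unfolding deg_x_def by (intro Max_ge) auto
next
  case False
  thus ?thesis by (simp add: coeff_eq_0)
qed

lemma deg_x_attained:
  assumes "\<exists>i. degree (coeff p i) > 0"
  shows "deg_x p > 0 \<and> (\<exists>j. degree (coeff p j) = deg_x p)"
proof -
  obtain i where i: "degree (coeff p i) > 0" using assms by blast
  have pos: "deg_x p > 0" using deg_x_ge[of p i] i by simp
  have "deg_x p \<in> insert 0 ((\<lambda>j. degree (coeff p j)) ` {..degree p})"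
    unfolding deg_x_def by (intro Max_in) auto
  thus ?thesis using pos by auto
qed

lemma inner_sum:
  fixes w :: "'a::field poly"
  assumes "degree w \<le> d"
  shows "(\<Sum>i\<le>d. coeff w i * snd (hom s) ^ i * fst (hom s) ^ (d - i)) =
         (case s of Some c \<Rightarrow> poly w c | None \<Rightarrow> coeff w d)"
proof (cases s)
  case None
  have "(\<Sum>i\<le>d. coeff w i * snd (hom s) ^ i * fst (hom s) ^ (d - i)) = (\<Sum>i\<le>d. if i = d then coeff w i else 0)"
    by (intro sum.cong) (auto simp: None hom_def)
  thus ?thesis by (simp add: None)
next
  case (Some c)
  have "(\<Sum>i\<le>d. coeff w i * snd (hom s) ^ i * fst (hom s) ^ (d - i)) = (\<Sum>i\<le>d. coeff w i * c ^ i)"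
    by (simp add: Some hom_def)
  also have "\<dots> = poly w c" using assms
    by (simp add: poly_altdef) (intro sum.mono_neutral_right, auto simp: coeff_eq_0)
  finally show ?thesis by (simp add: Some)
qed

definition ell :: "nat \<Rightarrow> 'a::field option \<Rightarrow> 'a poly \<Rightarrow> 'a" where
  "ell d s w = (case s of Some c \<Rightarrow> poly w c | None \<Rightarrow> coeff w d)"

lemma bihom_eval_ell:
  fixes p :: "'a::field poly poly"
  shows "bihom_eval p (hom s1) (hom s2) = ell (degree p) s2 (map_poly (ell (deg_x p) s1) p)"
proof -
  have "bihom_eval p (hom s1) (hom s2) =
     (\<Sum>j\<le>degree p. (\<Sum>i\<le>deg_x p. coeff (coeff p j) i * snd (hom s1) ^ i * fst (hom s1) ^ (deg_x p - i))
        * (snd (hom s2) ^ j * fst (hom s2) ^ (degree p - j)))"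
    unfolding bihom_eval_def by (simp add: sum_distrib_right sum_distrib_left mult_ac)
  also have "\<dots> = (\<Sum>j\<le>degree p. ell (deg_x p) s1 (coeff p j) * snd (hom s2) ^ j * fst (hom s2) ^ (degree p - j))"
    by (intro sum.cong refl) (simp add: inner_sum[OF deg_x_ge] ell_def)
  also have "\<dots> = (\<Sum>j\<le>degree p. coeff (map_poly (ell (deg_x p) s1) p) j * snd (hom s2) ^ j * fst (hom s2) ^ (degree p - j))"
  proof -
    have "ell (deg_x p) s1 0 = 0" by (simp add: ell_def split: option.split)
    thus ?thesis by (simp add: coeff_map_poly)
  qed
  also have "\<dots> = ell (degree p) s2 (map_poly (ell (deg_x p) s1) p)"
  proof -
    have "ell (deg_x p) s1 0 = 0" by (simp add: ell_def split: option.split)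
    hence "degree (map_poly (ell (deg_x p) s1) p) \<le> degree p" by (rule degree_map_poly_le0)
    thus ?thesis by (subst inner_sum) (simp_all add: ell_def)
  qed
  finally show ?thesis .
qed

definition Lx :: "nat \<Rightarrow> 'a::field option \<Rightarrow> 'a poly \<Rightarrow> 'a poly" where
  "Lx d s w = (case s of Some c \<Rightarrow> pcompose w [:c, 1:] | None \<Rightarrow> padrev d w)"

lemma Lx_0: "Lx d s 0 = 0"
  by (simp add: Lx_def padrev_def split: option.split)

lemma Lx_add: "Lx d s (a + b) = Lx d s a + Lx d s b"
  by (cases s) (simp_all add: Lx_def pcompose_add, rule poly_eqI, simp add: coeff_padrev)

lemma Lx_smult: "Lx d s (smult k a) = smult k (Lx d s a)"
  by (cases s) (simp_all add: Lx_def pcompose_smult, rule poly_eqI, simp add: coeff_padrev)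

lemma Lx_inj:
  assumes "degree w \<le> d" "Lx d s w = 0"
  shows "w = 0"
proof (cases s)
  case (Some c)
  thus ?thesis using assms by (simp add: Lx_def pcompose_eq_0_iff)
next
  case None
  show ?thesis
  proof (rule ccontr)
    assume "w \<noteq> 0"
    have "coeff (padrev d w) (d - degree w) = coeff w (degree w)" using assms(1) by (simp add: coeff_padrev)
    thus False using assms \<open>w \<noteq> 0\<close> None by (simp add: Lx_def)
  qed
qed

lemma Lx_coeff0: "coeff (Lx d s w) 0 = ell d s w"
proof (cases s)
  case None thus ?thesis by (simp add: Lx_def ell_def coeff_padrev)
next
  case (Some c)
  have "coeff (pcompose w [:c, 1:]) 0 = poly (pcompose w [:c, 1:]) 0" by (simp add: poly_0_coeff_0)
  thus ?thesis by (simp add: Some Lx_def ell_def poly_pcompose)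
qed

lemma poly_const_linear:
  fixes T :: "'a::field poly \<Rightarrow> 'a poly"
  assumes T0: "T 0 = 0" and Tadd: "\<And>a b. T (a + b) = T a + T b" and Tsm: "\<And>k a. T (smult k a) = smult k (T a)"
  shows "poly (map_poly T P) [:k:] = T (poly P [:k:])"
proof (induction P)
  case 0 thus ?case by (simp add: T0)
next
  case (pCons a P)
  have "poly (map_poly T (pCons a P)) [:k:] = T a + smult k (poly (map_poly T P) [:k:])"
    by (simp add: map_poly_pCons T0)
  also have "\<dots> = T (a + smult k (poly P [:k:]))" by (simp add: pCons Tadd Tsm)
  finally show ?case by simp
qed

lemma degree_poly_const:
  fixes P :: "'a::field poly poly"
  assumes "\<And>j. degree (coeff P j) \<le> d"
  shows "degree (poly P [:k:]) \<le> d"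
  using assms
proof (induction P)
  case 0 thus ?case by simp
next
  case (pCons a P)
  have "degree (coeff P j) \<le> d" for j using pCons(3)[of "Suc j"] by simp
  hence "degree (poly P [:k:]) \<le> d" by (rule pCons(2))
  moreover have "degree a \<le> d" using pCons(3)[of 0] by simp
  ultimately show ?case by (simp add: degree_add_le order.trans[OF degree_smult_le])
qed


lemma ev1_one: "ev1 1 Z = 1"
  by (simp add: ev1_def)

lemma xside:
  fixes x' :: "'a::field fls"
  assumes x: "x' \<noteq> 0" and dw: "degree w \<le> d"
  shows "ev1 w (moeb_inv s (inverse x')) = (case s of Some _ \<Rightarrow> 1 | None \<Rightarrow> inverse x' ^ d) * ev1 (Lx d s w) x'"
proof (cases s)
  case (Some c)
  have lin: "poly (map_poly fls_const [:c, 1:]) x' = fls_const c + x'"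
    by (simp add: map_poly_pCons fls_const_0 fls_const_1)
  have "ev1 w (moeb_inv s (inverse x')) = poly (map_poly fls_const w) (poly (map_poly fls_const [:c, 1:]) x')"
    by (simp add: Some moeb_inv_def ev1_def lin)
  also have "\<dots> = poly (map_poly fls_const (pcompose w [:c, 1:])) x'"
    by (simp add: poly_pcompose map_poly_hom_pcompose[OF fls_const_hom(1,3,4)])
  finally show ?thesis by (simp add: Some Lx_def ev1_def)
next
  case None
  have dm: "degree (map_poly fls_const w) \<le> d" using dw by (simp add: degree_map_poly)
  have "ev1 w (moeb_inv s (inverse x')) = poly (map_poly fls_const w) (inverse x')"
    by (simp add: None moeb_inv_def ev1_def)
  also have "\<dots> = inverse x' ^ d * poly (padrev d (map_poly fls_const w)) x'"
    by (rule padrev_poly[OF x dm])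
  finally show ?thesis by (simp add: None Lx_def ev1_def map_padrev fls_const_0)
qed

definition Ly :: "nat \<Rightarrow> 'a::field option \<Rightarrow> 'a poly poly \<Rightarrow> 'a poly poly" where
  "Ly d s P = (case s of Some c \<Rightarrow> pcompose P [:[:c:], 1:] | None \<Rightarrow> padrev d P)"

lemma yside:
  fixes y' :: "'a::field fls"
  assumes y: "y' \<noteq> 0" and dP: "degree P \<le> d"
  shows "eval2 P x' (moeb_inv s (inverse y')) = (case s of Some _ \<Rightarrow> 1 | None \<Rightarrow> inverse y' ^ d) * eval2 (Ly d s P) x' y'"
proof (cases s)
  case (Some c)
  have lin: "poly (map_poly (\<lambda>w. ev1 w x') [:[:c:], 1:]) y' = fls_const c + y'"
    by (simp add: map_poly_pCons ev1_0 ev1_const ev1_one)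
  have "eval2 P x' (moeb_inv s (inverse y')) = poly (map_poly (\<lambda>w. ev1 w x') P) (poly (map_poly (\<lambda>w. ev1 w x') [:[:c:], 1:]) y')"
    by (simp add: Some moeb_inv_def eval2_alt lin)
  also have "\<dots> = poly (map_poly (\<lambda>w. ev1 w x') (pcompose P [:[:c:], 1:])) y'"
    by (simp add: poly_pcompose map_poly_hom_pcompose[OF ev1X_hom(1,2,3)])
  finally show ?thesis by (simp add: Some Ly_def eval2_alt)
next
  case None
  have dm: "degree (map_poly (\<lambda>w. ev1 w x') P) \<le> d"
    using order.trans[OF degree_map_poly_le0[of "\<lambda>w. ev1 w x'", OF ev1X_hom(1)] dP] .
  have "eval2 P x' (moeb_inv s (inverse y')) = poly (map_poly (\<lambda>w. ev1 w x') P) (inverse y')"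
    by (simp add: None moeb_inv_def eval2_alt)
  also have "\<dots> = inverse y' ^ d * poly (padrev d (map_poly (\<lambda>w. ev1 w x') P)) y'"
    by (rule padrev_poly[OF y dm])
  finally show ?thesis by (simp add: None Ly_def eval2_alt map_padrev ev1_0)
qed

lemma xside_full:
  fixes p :: "'a::field poly poly"
  assumes x: "x' \<noteq> 0"
  shows "eval2 p (moeb_inv s (inverse x')) Y =
    (case s of Some _ \<Rightarrow> 1 | None \<Rightarrow> inverse x' ^ deg_x p) * eval2 (map_poly (Lx (deg_x p) s) p) x' Y"
proof -
  define u where "u = (case s of Some _ \<Rightarrow> 1 | None \<Rightarrow> inverse x' ^ deg_x p)"
  have "map_poly (\<lambda>w. ev1 w (moeb_inv s (inverse x'))) p =
        smult u (map_poly (\<lambda>w. ev1 w x') (map_poly (Lx (deg_x p) s) p))"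
    by (intro poly_eqI) (simp add: coeff_map_poly ev1_0 Lx_0 xside[OF x deg_x_ge] u_def)
  thus ?thesis by (simp add: eval2_alt u_def)
qed

lemma ev1_fps: "ev1 w (fps_to_fls Z) = fps_to_fls (poly (map_poly fps_const w) Z)"
  by (induction w) (simp_all add: ev1_def map_poly_pCons fps_to_fls_plus fls_times_fps_to_fls fps_const_to_fls fls_const_0)

lemma fps_of_poly_compX:
  assumes "n > 0"
  shows "fps_of_poly (w :: 'a::field poly) oo fps_X ^ n = poly (map_poly fps_const w) (fps_X ^ n)"
proof (induction w)
  case 0 thus ?case by simp
next
  case (pCons a w)
  have X: "fps_X oo (fps_X ^ n :: 'a fps) = fps_X ^ n" by (rule fps_X_fps_compose_startby0) (use assms in simp)
  show ?case using assms
    by (simp add: fps_of_poly_pCons fps_compose_add_distrib fps_compose_mult_distrib X pCons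
        map_poly_pCons mult.commute)
qed

lemma eval2_fps:
  fixes P :: "'a::field poly poly"
  assumes "n > 0"
  shows "eval2 P (fps_to_fls (fps_X ^ n)) (fps_to_fls y) =
         fps_to_fls (poly (map_poly (\<lambda>q. q oo fps_X ^ n) (map_poly fps_of_poly P)) y)"
proof (induction P)
  case 0 thus ?case by (simp add: eval2_alt)
next
  case (pCons a P)
  have "eval2 (pCons a P) (fps_to_fls (fps_X ^ n)) (fps_to_fls y)
      = ev1 a (fps_to_fls (fps_X ^ n)) + fps_to_fls y * eval2 P (fps_to_fls (fps_X ^ n)) (fps_to_fls y)"
    by (simp add: eval2_alt map_poly_pCons ev1_0)
  also have "\<dots> = fps_to_fls (fps_of_poly a oo fps_X ^ n) + fps_to_fls y * fps_to_fls (poly (map_poly (\<lambda>q. q oo fps_X ^ n) (map_poly fps_of_poly P)) y)"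
    by (simp add: ev1_fps fps_of_poly_compX[OF assms] pCons)
  also have "\<dots> = fps_to_fls (poly (map_poly (\<lambda>q. q oo fps_X ^ n) (map_poly fps_of_poly (pCons a P))) y)"
    by (simp add: map_poly_pCons fps_to_fls_plus fls_times_fps_to_fls)
  finally show ?case .
qed


lemma irr_not_root_x:
  fixes p :: "'a::field poly poly"
  assumes irr: "irreducible p" and dp: "degree p > 0"
  shows "\<exists>j. poly (coeff p j) c \<noteq> 0"
proof (rule ccontr)
  assume "\<not> (\<exists>j. poly (coeff p j) c \<noteq> 0)"
  hence z0: "\<And>j. [:-c, 1:] dvd coeff p j" by (simp add: poly_eq_0_iff_dvd)
  define a where "a = [:-c, 1:]"
  have z: "\<And>j. a dvd coeff p j" using z0 by (simp add: a_def)
  define p' where "p' = map_poly (\<lambda>w. w div a) p"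
  have pp: "p = [:a:] * p'"
  proof (rule poly_eqI)
    fix j
    have "coeff ([:a:] * p') j = a * (coeff p j div a)" by (simp add: p'_def coeff_map_poly)
    also have "\<dots> = coeff p j" by (rule dvd_mult_div_cancel[OF z])
    finally show "coeff p j = coeff ([:a:] * p') j" by simp
  qed
  have "is_unit [:a:] \<or> is_unit p'" by (rule irreducibleD[OF irr pp])
  moreover have "\<not> is_unit [:a:]" by (simp add: a_def is_unit_const_poly_iff field_poly_unit_iff)
  ultimately have "is_unit p'" by blast
  hence "degree p' = 0" by (auto simp: is_unit_poly_iff)
  hence "degree p = 0" using pp by (simp add: degree_mult_le)
  thus False using dp by simp
qed

lemma irr_not_root_y:
  fixes p :: "'a::field poly poly"
  assumes irr: "irreducible p" and dxp: "\<exists>i. degree (coeff p i) > 0"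
  shows "poly p [:c:] \<noteq> 0"
proof
  assume "poly p [:c:] = 0"
  hence "[:-[:c:], 1:] dvd p" by (simp add: poly_eq_0_iff_dvd)
  then obtain q where q: "p = [:-[:c:], 1:] * q" by (elim dvdE)
  have "is_unit [:-[:c:], 1:] \<or> is_unit q" by (rule irreducibleD[OF irr q])
  moreover have "\<not> is_unit [:-[:c:], 1:]" by (auto simp: is_unit_poly_iff)
  ultimately have "is_unit q" by blast
  then obtain k where k: "q = [:k:]" "is_unit k" by (auto simp: is_unit_poly_iff)
  then obtain \<kappa> where kk: "k = [:\<kappa>:]" by (auto simp: is_unit_poly_iff)
  have "degree (coeff p i) = 0" for i
    using q k kk by (auto simp: coeff_pCons split: nat.splits)
  thus False using dxp by simp
qed

lemma coeff0_hom:
  "(\<lambda>w::'a::field poly. coeff w 0) 0 = 0"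
  "\<And>a b. (\<lambda>w::'a::field poly. coeff w 0) (a + b) = coeff a 0 + coeff b 0"
  "\<And>a b. (\<lambda>w::'a::field poly. coeff w 0) (a * b) = coeff a 0 * coeff b 0"
  by (simp_all flip: poly_0_coeff_0 add: poly_mult)

lemma branch_exists:
  fixes p :: "'a::field_char_0 poly poly"
  assumes ac: "alg_closed TYPE('a)" and irr: "irreducible p" and dp: "degree p > 0"
    and dxp: "\<exists>i. degree (coeff p i) > 0" and Q: "Q \<in> curve p"
  shows "\<exists>n \<psi>. n > 0 \<and> fls_subdegree \<psi> < 0 \<and> \<psi> \<noteq> 0 \<and>
     eval2 p (moeb_inv (fst Q) (inverse (fls_X ^ n))) (moeb_inv (snd Q) \<psi>) = 0"
proof -
  obtain s1 s2 where Qs: "Q = (s1, s2)" by (cases Q)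
  define dx where "dx = deg_x p"
  define dy where "dy = degree p"
  define p1 where "p1 = map_poly (Lx dx s1) p"
  define p2 where "p2 = Ly dy s2 p1"
  define L where "L = map_poly (ell dx s1) p"
  have ell0: "ell d s 0 = 0" for d s by (simp add: ell_def split: option.split)
  have dp1: "degree p1 \<le> dy" unfolding p1_def dy_def by (rule degree_map_poly_le0) (simp add: Lx_0)
  have dL: "degree L \<le> dy" unfolding L_def dy_def by (rule degree_map_poly_le0) (simp add: ell0)
  have F2: "map_poly (\<lambda>w. coeff w 0) p1 = L"
    by (intro poly_eqI) (simp add: p1_def L_def coeff_map_poly Lx_0 Lx_coeff0 ell0)
  have F3: "map_poly (\<lambda>w. coeff w 0) p2 = Lx dy s2 L"
  proof (cases s2)
    case None thus ?thesis by (simp add: p2_def Ly_def Lx_def map_padrev F2)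
  next
    case (Some c)
    have "map_poly (\<lambda>w. coeff w 0) (pcompose p1 [:[:c:], 1:]) =
          pcompose (map_poly (\<lambda>w. coeff w 0) p1) (map_poly (\<lambda>w. coeff w 0) [:[:c:], 1:])"
      by (rule map_poly_hom_pcompose[OF coeff0_hom])
    also have "map_poly (\<lambda>w::'a poly. coeff w 0) [:[:c:], 1:] = [:c, 1:]" by (simp add: map_poly_pCons)
    finally show ?thesis by (simp add: Some p2_def Ly_def Lx_def F2)
  qed
  define e0 where "e0 = Lx dy s2 L"
  have F5: "ell dy s2 L = 0"
    using Q bihom_eval_ell[of p s1 s2] by (simp add: Qs curve_def dx_def dy_def L_def)
  have e00: "coeff e0 0 = 0" using F5 by (simp add: e0_def Lx_coeff0)
  have Lnz: "L \<noteq> 0"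
  proof (cases s1)
    case None
    obtain j where j: "degree (coeff p j) = dx" and dxpos: "dx > 0"
      using deg_x_attained[OF dxp] by (auto simp: dx_def)
    have "coeff p j \<noteq> 0" using j dxpos by auto
    hence "lead_coeff (coeff p j) \<noteq> 0" by simp
    hence "coeff (coeff p j) dx \<noteq> 0" using j by simp
    hence "coeff L j \<noteq> 0" by (simp add: L_def coeff_map_poly ell0 ell_def None)
    thus ?thesis by auto
  next
    case (Some c)
    obtain j where "poly (coeff p j) c \<noteq> 0" using irr_not_root_x[OF irr dp] by blast
    hence "coeff L j \<noteq> 0" by (simp add: L_def coeff_map_poly ell0 ell_def Some)
    thus ?thesis by auto
  qed
  have e0nz: "e0 \<noteq> 0" using Lx_inj[OF dL] Lnz by (auto simp: e0_def)
  define F where "F = map_poly fps_of_poly p2"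
  define m where "m = order 0 e0"
  have cF: "coeff F j $ 0 = coeff e0 j" for j
  proof -
    have "coeff e0 j = coeff (map_poly (\<lambda>w. coeff w 0) p2) j" by (simp add: e0_def F3)
    thus ?thesis by (simp add: F_def coeff_map_poly)
  qed
  have mu: "mult0 F m" unfolding mult0_def cF m_def using ord_coeffs[OF e0nz] by auto
  have mpos: "m > 0"
  proof -
    have "poly e0 0 = 0" using e00 by (simp add: poly_0_coeff_0)
    thus ?thesis using e0nz order_root[of e0 0] by (simp add: m_def)
  qed
  obtain n y where s: "sol F n y" using puiseux_local[OF ac mpos mu] by blast
  have n: "n > 0" and y0: "y $ 0 = 0" and py: "poly (map_poly (\<lambda>q. q oo fps_X ^ n) F) y = 0"
    using s by (auto simp: sol_def)
  have cp20: "coeff p2 0 \<noteq> 0"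
  proof (cases s2)
    case None
    have "coeff p2 0 = coeff p1 dy" by (simp add: p2_def Ly_def None coeff_padrev)
    also have "\<dots> = Lx dx s1 (lead_coeff p)" by (simp add: p1_def dy_def coeff_map_poly Lx_0)
    finally have "coeff p2 0 = Lx (deg_x p) s1 (lead_coeff p)" by (simp add: dx_def)
    moreover have "lead_coeff p \<noteq> 0" using dp by auto
    ultimately show ?thesis using Lx_inj[where s=s1, OF deg_x_ge[of p "degree p"]] by auto
  next
    case (Some c)
    have "coeff p2 0 = poly (pcompose p1 [:[:c:], 1:]) 0" by (simp add: p2_def Ly_def Some poly_0_coeff_0)
    also have "\<dots> = poly p1 [:c:]" by (simp add: poly_pcompose)
    also have "\<dots> = Lx dx s1 (poly p [:c:])" unfolding p1_def
      by (rule poly_const_linear) (simp_all add: Lx_0 Lx_add Lx_smult)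
    finally have eq: "coeff p2 0 = Lx dx s1 (poly p [:c:])" .
    have "degree (poly p [:c:]) \<le> dx" unfolding dx_def by (rule degree_poly_const) (rule deg_x_ge)
    moreover have "poly p [:c:] \<noteq> 0" by (rule irr_not_root_y[OF irr dxp])
    ultimately show ?thesis using eq Lx_inj[where s=s1 and d=dx and w="poly p [:c:]"] by auto
  qed
  have ynz: "y \<noteq> 0"
  proof
    assume "y = 0"
    hence "coeff F 0 oo fps_X ^ n = 0" using py by (simp add: poly_0_coeff_0 coeff_map_poly)
    hence "coeff F 0 = 0" using n by (simp add: fps_compose_eq_0_iff)
    hence "coeff p2 0 = 0" by (simp add: F_def coeff_map_poly fps_of_poly_eq_iff[of _ 0, simplified])
    thus False using cp20 by simp
  qed
  define x' where "x' = fps_to_fls (fps_X ^ n :: 'a fps)"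
  define y' where "y' = fps_to_fls y"
  define \<psi> where "\<psi> = inverse y'"
  have x'nz: "x' \<noteq> 0" by (simp add: x'_def)
  have y'nz: "y' \<noteq> 0" using ynz by (simp add: y'_def)
  have x'eq: "x' = fls_X ^ n" by (simp add: x'_def fps_to_fls_power fps_X_to_fls)
  have p2z: "eval2 p2 x' y' = 0"
    using eval2_fps[OF n, of p2 y] py by (simp add: x'_def y'_def F_def)
  have "eval2 p (moeb_inv s1 (inverse x')) (moeb_inv s2 \<psi>) =
      (case s1 of Some _ \<Rightarrow> 1 | None \<Rightarrow> inverse x' ^ deg_x p) * eval2 p1 x' (moeb_inv s2 (inverse y'))"
    by (simp add: xside_full[OF x'nz] p1_def dx_def \<psi>_def)
  also have "eval2 p1 x' (moeb_inv s2 (inverse y')) = (case s2 of Some _ \<Rightarrow> 1 | None \<Rightarrow> inverse y' ^ dy) * eval2 p2 x' y'"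
    unfolding p2_def by (rule yside[OF y'nz dp1])
  finally have ev: "eval2 p (moeb_inv s1 (inverse x')) (moeb_inv s2 \<psi>) = 0" by (simp add: p2z)
  have "subdegree y > 0" using ynz y0 by (simp add: subdegree_pos_iff)
  hence sdp: "fls_subdegree \<psi> < 0" by (simp add: \<psi>_def y'_def fls_inverse_subdegree fls_subdegree_fls_to_fps)
  have psinz: "\<psi> \<noteq> 0" using y'nz by (simp add: \<psi>_def)
  show ?thesis using n sdp psinz ev by (intro exI[of _ n] exI[of _ \<psi>]) (simp add: Qs x'eq)
qed


lemma neg_diff1:
  assumes "fls_subdegree A < 0" "\<not> fls_subdegree B < 0"
  shows "fls_subdegree (A - B) < 0"
proof -
  obtain i where i: "i < 0" "fls_nth A i \<noteq> 0" using assms(1) fls_neg_iff by blast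
  have "fls_nth B i = 0" using assms(2) i(1) fls_nonneg_iff by blast
  hence "fls_nth (A - B) i \<noteq> 0" using i by (simp add: fls_minus_nth)
  thus ?thesis using i(1) fls_neg_iff by blast
qed

lemma neg_diff2:
  assumes "\<not> fls_subdegree A < 0" "fls_subdegree B < 0"
  shows "fls_subdegree (A - B) < 0"
proof -
  obtain i where i: "i < 0" "fls_nth B i \<noteq> 0" using assms(2) fls_neg_iff by blast
  have "fls_nth A i = 0" using assms(1) i(1) fls_nonneg_iff by blast
  hence "fls_nth (A - B) i \<noteq> 0" using i by (simp add: fls_minus_nth)
  thus ?thesis using i(1) fls_neg_iff by blast
qed

lemma eval2_const_x: "eval2 (const_x u) X Y = ev1 u X"
  by (simp add: const_x_def eval2_const)

lemma eval2_const_y: "eval2 (const_y u) X Y = ev1 u Y"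
proof -
  have "map_poly (\<lambda>c. ev1 c X) (map_poly (\<lambda>c. [:c:]) u) = map_poly fls_const u"
    by (intro poly_eqI) (simp add: coeff_map_poly ev1_const ev1_0)
  thus ?thesis by (simp add: const_y_def eval2_alt ev1_def)
qed

lemma const_x_nz: "v \<noteq> 0 \<Longrightarrow> const_x v \<noteq> 0" by (simp add: const_x_def)
lemma const_y_nz: "v \<noteq> 0 \<Longrightarrow> const_y (v::'a::field poly) \<noteq> 0"
  by (simp add: const_y_def map_poly_eq_0_iff)

lemma emb_x_rep: "\<exists>u v. v \<noteq> 0 \<and> f = Fract u v \<and> emb_x f = Fract (const_x u) (const_x v)"
proof -
  obtain u v where "f = Fract u v" "v \<noteq> 0" by (cases f) auto
  hence ex: "\<exists>R u v. v \<noteq> 0 \<and> f = Fract u v \<and> R = Fract (const_x u) (const_x v)" by blast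
  show ?thesis using someI_ex[OF ex] unfolding emb_x_def by blast
qed

lemma emb_y_rep: "\<exists>u v. v \<noteq> 0 \<and> g = Fract u v \<and> emb_y g = Fract (const_y u) (const_y v)"
proof -
  obtain u v where "g = Fract u v" "v \<noteq> 0" by (cases g) auto
  hence ex: "\<exists>R u v. v \<noteq> 0 \<and> g = Fract u v \<and> R = Fract (const_y u) (const_y v)" by blast
  show ?thesis using someI_ex[OF ex] unfolding emb_y_def by blast
qed

lemma eval_fract_eq:
  assumes eq: "Fract A1 B1 = Fract A2 B2" and nz: "B1 \<noteq> 0" "B2 \<noteq> 0"
    and e1: "eval2 B1 X Y \<noteq> 0" and e2: "eval2 B2 X Y \<noteq> 0"
  shows "eval2 A1 X Y / eval2 B1 X Y = eval2 A2 X Y / eval2 B2 X Y"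
proof -
  have "A1 * B2 = A2 * B1" using eq nz by (simp add: eq_fract)
  hence "eval2 A1 X Y * eval2 B2 X Y = eval2 A2 X Y * eval2 B1 X Y" by (simp flip: eval2_mult)
  thus ?thesis using e1 e2 by (simp add: field_simps)
qed

lemma branch_identity:
  fixes p :: "'a::field poly poly"
  assumes irr: "irreducible p" and dp: "degree p > 0"
    and pz: "eval2 p X Y = 0" and trX: "transc X" and trY: "transc Y"
    and FF: "(f, g) \<in> FF r p" and rab: "r = Fract a b" "b \<noteq> 0" "\<not> p dvd b"
  shows "eval2 b X Y \<noteq> 0 \<and> eval2 a X Y / eval2 b X Y = evf f X - evf g Y"
proof -
  have ebnz: "eval2 b X Y \<noteq> 0" by (rule eval2_nonvanish[OF irr dp pz trX rab(3)])
  obtain u v where uv: "v \<noteq> 0" "f = Fract u v" "emb_x f = Fract (const_x u) (const_x v)"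
    using emb_x_rep by blast
  obtain u' v' where uv': "v' \<noteq> 0" "g = Fract u' v'" "emb_y g = Fract (const_y u') (const_y v')"
    using emb_y_rep by blast
  from FF obtain q where q: "q \<in> loc p" "emb_x f - emb_y g - r = q * Fract p 1"
    by (auto simp: FF_def ideal_loc_def)
  from q(1) obtain a1 b1 where ab1: "b1 \<noteq> 0" "q = Fract a1 b1" "\<not> p dvd b1" by (auto simp: loc_def)
  have eb1: "eval2 b1 X Y \<noteq> 0" by (rule eval2_nonvanish[OF irr dp pz trX ab1(3)])
  have evnz: "ev1 v X \<noteq> 0" "ev1 v' Y \<noteq> 0" using trX trY uv(1) uv'(1) by (auto simp: transc_def)
  define cu where "cu = const_x u"
  define cv where "cv = const_x v"
  define du where "du = const_y u'"
  define dv where "dv = const_y v'"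
  have cvnz: "cv \<noteq> 0" "dv \<noteq> 0" using uv(1) uv'(1) by (simp_all add: cv_def dv_def const_x_nz const_y_nz)
  have "Fract (cu * dv * b - du * cv * b - a * (cv * dv)) (cv * dv * b) = Fract (a1 * p) b1"
  proof -
    have "Fract cu cv - Fract du dv - Fract a b = Fract a1 b1 * Fract p 1"
      using q(2) uv(3) uv'(3) rab(1) ab1(2) by (simp add: cu_def cv_def du_def dv_def)
    hence "Fract (b * (cu * dv - cv * du) - a * (cv * dv)) (b * (cv * dv)) = Fract (a1 * p) b1"
      using cvnz rab(2) ab1(1) by (simp add: diff_fract mult_fract mult_ac)
    moreover have "b * (cu * dv - cv * du) = cu * dv * b - du * cv * b" by (simp add: algebra_simps)
    moreover have "b * (cv * dv) = cv * dv * b" by (simp add: algebra_simps)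
    ultimately show ?thesis by simp
  qed
  moreover have "cv * dv * b \<noteq> 0" using cvnz rab(2) by simp
  moreover have ev_den: "eval2 (cv * dv * b) X Y \<noteq> 0"
    using evnz ebnz by (simp add: eval2_mult cv_def dv_def eval2_const_x eval2_const_y)
  ultimately have "eval2 (cu * dv * b - du * cv * b - a * (cv * dv)) X Y / eval2 (cv * dv * b) X Y
      = eval2 (a1 * p) X Y / eval2 b1 X Y"
    using ab1(1) eb1 by (intro eval_fract_eq) auto
  also have "\<dots> = 0" by (simp add: eval2_mult pz)
  finally have z: "eval2 (cu * dv * b - du * cv * b - a * (cv * dv)) X Y / eval2 (cv * dv * b) X Y = 0" .
  have ef: "evf f X = ev1 u X / ev1 v X" by (rule evf_rep[OF trX uv(1,2)])
  have eg: "evf g Y = ev1 u' Y / ev1 v' Y" by (rule evf_rep[OF trY uv'(1,2)])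
  have "eval2 (cu * dv * b - du * cv * b - a * (cv * dv)) X Y =
        ev1 u X * ev1 v' Y * eval2 b X Y - ev1 u' Y * ev1 v X * eval2 b X Y - eval2 a X Y * (ev1 v X * ev1 v' Y)"
    by (simp add: eval2_mult eval2_diff cu_def cv_def du_def dv_def eval2_const_x eval2_const_y)
  moreover have "eval2 (cv * dv * b) X Y = ev1 v X * ev1 v' Y * eval2 b X Y"
    by (simp add: eval2_mult cv_def dv_def eval2_const_x eval2_const_y)
  ultimately have "ev1 u X * ev1 v' Y * eval2 b X Y - ev1 u' Y * ev1 v X * eval2 b X Y - eval2 a X Y * (ev1 v X * ev1 v' Y) = 0"
    using z ev_den by simp
  hence "eval2 a X Y / eval2 b X Y = ev1 u X / ev1 v X - ev1 u' Y / ev1 v' Y"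
    using evnz ebnz by (simp add: field_simps)
  thus ?thesis using ebnz ef eg by simp
qed

lemma finite_poles: "finite {s. is_pole_1 (f :: 'a::field poly fract) s}"
proof -
  obtain u v where f: "f = Fract u v" and v: "v \<noteq> 0" by (cases f) auto
  define \<phi> where "\<phi> = (inverse fls_X :: 'a fls)"
  have neg: "fls_subdegree \<phi> < 0" by (simp add: \<phi>_def fls_inverse_subdegree)
  have "{s. is_pole_1 f s} \<subseteq> insert None (Some ` {c. poly v c = 0})"
  proof
    fix s assume "s \<in> {s. is_pole_1 f s}"
    hence P: "fls_subdegree (evf f (moeb_inv s \<phi>)) < 0" using pole_crit[OF neg] by simp
    have ev: "evf f (moeb_inv s \<phi>) = ev1 u (moeb_inv s \<phi>) / ev1 v (moeb_inv s \<phi>)"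
      by (rule evf_rep[OF transc_moeb[OF neg] v f])
    have u: "u \<noteq> 0"
    proof
      assume "u = 0" thus False using P ev by (simp add: ev1_0)
    qed
    show "s \<in> insert None (Some ` {c. poly v c = 0})"
    proof (cases s)
      case None thus ?thesis by simp
    next
      case (Some c)
      have "order c v > order c u" using pole_rep[OF neg v u, of s] P ev Some by simp
      hence "order c v \<noteq> 0" by simp
      hence "poly v c = 0" using order_root[of v c] v by simp
      thus ?thesis using Some by simp
    qed
  qed
  moreover have "finite (insert None (Some ` {c. poly v c = 0}))" using poly_roots_finite[OF v] by simp
  ultimately show ?thesis by (rule finite_subset)
qed


theorem proposition8:
  fixes p :: "'a::field_char_0 poly poly"
    and r :: "'a poly poly fract"
    and f g :: "'a poly fract"
    and P0 :: "'a option \<times> 'a option"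
  assumes "alg_closed TYPE('a)"
    and "irreducible p"
    and "degree p > 0"
    and "\<exists>i. degree (coeff p i) > 0"
    and "F_trivial p"
    and "r \<in> loc p - ideal_loc p"
    and "(f, g) \<in> FF r p"
    and "is_pole_r p r P0"
    and "infinite (orbit p P0)"
  shows "\<exists>Q\<in>orbit p P0. is_pole_r p r Q \<and> (\<not> is_pole_1 f (fst Q) \<or> \<not> is_pole_1 g (snd Q))"
proof (rule ccontr)
  note ac = assms(1) and irr = assms(2) and dp = assms(3) and dxp = assms(4)
  assume nc: "\<not> (\<exists>Q\<in>orbit p P0. is_pole_r p r Q \<and> (\<not> is_pole_1 f (fst Q) \<or> \<not> is_pole_1 g (snd Q)))"
  hence H: "\<And>Q. Q \<in> orbit p P0 \<Longrightarrow> is_pole_r p r Q \<Longrightarrow> is_pole_1 f (fst Q) \<and> is_pole_1 g (snd Q)"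
    by blast
  obtain a b where rab: "b \<noteq> 0" "r = Fract a b" "\<not> p dvd b" using assms(6) by (auto simp: loc_def)
  have P0c: "P0 \<in> curve p" using assms(8) by (simp add: is_pole_r_def)
  have curveO: "Q \<in> curve p" if "Q \<in> orbit p P0" for Q
  proof -
    have "(P0, Q) \<in> (orbit_rel p)\<^sup>*" using that by (simp add: orbit_def)
    thus ?thesis
    proof (induction rule: rtrancl_induct)
      case base thus ?case by (rule P0c)
    next
      case (step y z) thus ?case by (simp add: orbit_rel_def)
    qed
  qed
  have claimA: "is_pole_1 f (fst Q) \<longleftrightarrow> is_pole_1 g (snd Q)" if QO: "Q \<in> orbit p P0" for Q
  proof -
    have Qc: "Q \<in> curve p" by (rule curveO[OF QO])
    obtain n \<psi> where br: "n > 0" "fls_subdegree \<psi> < 0" "\<psi> \<noteq> 0"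
      "eval2 p (moeb_inv (fst Q) (inverse (fls_X ^ n))) (moeb_inv (snd Q) \<psi>) = 0"
      using branch_exists[OF ac irr dp dxp Qc] by blast
    define \<phi> where "\<phi> = (inverse (fls_X ^ n) :: 'a fls)"
    define X where "X = moeb_inv (fst Q) \<phi>"
    define Y where "Y = moeb_inv (snd Q) \<psi>"
    have negphi: "fls_subdegree \<phi> < 0" using br(1) by (simp add: \<phi>_def fls_inverse_subdegree)
    have trX: "transc X" unfolding X_def by (rule transc_moeb[OF negphi])
    have trY: "transc Y" unfolding Y_def by (rule transc_moeb[OF br(2)])
    have pz: "eval2 p X Y = 0" using br(4) by (simp add: X_def Y_def \<phi>_def)
    have bi: "eval2 b X Y \<noteq> 0 \<and> eval2 a X Y / eval2 b X Y = evf f X - evf g Y"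
      by (rule branch_identity[OF irr dp pz trX trY assms(7) rab(2,1,3)])
    have pf: "is_pole_1 f (fst Q) \<longleftrightarrow> fls_subdegree (evf f X) < 0"
      unfolding X_def by (rule pole_crit[OF negphi])
    have pg: "is_pole_1 g (snd Q) \<longleftrightarrow> fls_subdegree (evf g Y) < 0"
      unfolding Y_def by (rule pole_crit[OF br(2)])
    have polr: "is_pole_r p r Q" if N: "fls_subdegree (evf f X - evf g Y) < 0"
    proof -
      have "eval2 b X Y \<noteq> 0" "fls_subdegree (eval2 a X Y / eval2 b X Y) < 0" using bi N by auto
      thus ?thesis unfolding is_pole_r_def Let_def
        using Qc br(1,2,3) pz rab(1,2)
        by (intro conjI exI[of _ n] exI[of _ \<psi>] exI[of _ a] exI[of _ b]) (auto simp: X_def Y_def \<phi>_def)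
    qed
    show ?thesis
    proof
      assume A: "is_pole_1 f (fst Q)"
      show "is_pole_1 g (snd Q)"
      proof (rule ccontr)
        assume B: "\<not> is_pole_1 g (snd Q)"
        have "fls_subdegree (evf f X - evf g Y) < 0" using A B pf pg by (intro neg_diff1) auto
        hence "is_pole_r p r Q" by (rule polr)
        thus False using H[OF QO] B by blast
      qed
    next
      assume B: "is_pole_1 g (snd Q)"
      show "is_pole_1 f (fst Q)"
      proof (rule ccontr)
        assume A: "\<not> is_pole_1 f (fst Q)"
        have "fls_subdegree (evf f X - evf g Y) < 0" using A B pf pg by (intro neg_diff2) auto
        hence "is_pole_r p r Q" by (rule polr)
        thus False using H[OF QO] A by blast
      qed
    qed
  qed
  have P0O: "P0 \<in> orbit p P0" by (simp add: orbit_def)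
  have fP0: "is_pole_1 f (fst P0)" using H[OF P0O assms(8)] by blast
  have allf: "is_pole_1 f (fst Q)" if "Q \<in> orbit p P0" for Q
  proof -
    have "(P0, Q) \<in> (orbit_rel p)\<^sup>*" using that by (simp add: orbit_def)
    thus ?thesis
    proof (induction rule: rtrancl_induct)
      case base thus ?case by (rule fP0)
    next
      case (step y z)
      have yO: "y \<in> orbit p P0" using step(1) by (simp add: orbit_def)
      have zO: "z \<in> orbit p P0" using step(1,2) by (simp add: orbit_def)
      have "fst y = fst z \<or> snd y = snd z" using step(2) by (simp add: orbit_rel_def)
      thus ?case
      proof
        assume "fst y = fst z" thus ?thesis using step(3) by simp
      next
        assume e: "snd y = snd z"
        have "is_pole_1 g (snd y)" using claimA[OF yO] step(3) by simp
        hence "is_pole_1 g (snd z)" using e by simp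
        thus ?thesis using claimA[OF zO] by simp
      qed
    qed
  qed
  have "orbit p P0 \<subseteq> {s. is_pole_1 f s} \<times> {s. is_pole_1 g s}"
  proof
    fix Q assume QO: "Q \<in> orbit p P0"
    have "is_pole_1 f (fst Q)" by (rule allf[OF QO])
    moreover hence "is_pole_1 g (snd Q)" using claimA[OF QO] by simp
    ultimately show "Q \<in> {s. is_pole_1 f s} \<times> {s. is_pole_1 g s}" by (cases Q) simp
  qed
  moreover have "finite ({s. is_pole_1 f s} \<times> {s. is_pole_1 g s})"
    using finite_poles[of f] finite_poles[of g] by simp
  ultimately have "finite (orbit p P0)" by (rule finite_subset)
  thus False using assms(9) by simp
qed


end
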